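(* Let $A$ be an augmented dga, $\mathfrak a\lhd A$ an ideal and $C$ a cocomplete coaugmented dgc. Being related by an $\mathfrak a$-trivial homotopy is an equivalence relation on twisting cochains $C\to A$. More precisely: (i) if $h\colon t\simeq u$ and $k\colon u\simeq v$ are $\mathfrak a$-trivial twisting cochain homotopies, then $h\cup k$ is an $\mathfrak a$-trivial homotopy from $t$ to $v$; (ii) if $h\colon t\simeq u$ is an $\mathfrak a$-trivial twisting cochain homotopy, then $h$ is invertible in $\operatorname{Hom}_0(C,A)$ with inverse $h^{-1}=\sum_{n=0}^\infty(1-h)^{\cup n}$, and $h^{-1}$ is an $\mathfrak a$-trivial homotopy from $u$ to $t$.
   Context: An ideal means a two-sided differential ideal. $\operatorname{Hom}(C,A)$ is an augmented dga with cup product $f\cup g=\mu_A(f\otimes g)\Delta_C$, unit $1=\eta_A\epsilon_C$. $C$ is cocomplete if for each $c\in C$ some $n$ has $(1_C-\epsilon_C)^{\otimes n}\Delta^{(n)}(c)=0$ (iterated diagonal). A twisting cochain is $t\in\operatorname{Hom}^1(C,A)$ with $d(t)=t\cup t$, $\epsilon_At=0$, $t\eta_C=0$. A twisting cochain homotopy $h\colon t\simeq u$ is $h\in\operatorname{Hom}_0(C,A)$ with $d(h)=t\cup h-h\cup u$, $\epsilon_Ah=\epsilon_C$, $h\eta_C=\eta_A$; it is $\mathfrak a$-trivial if $h\equiv\eta_A\epsilon_C\pmod{\mathfrak a}$. *)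

theory Defs
  imports Main "HOL-Library.Poly_Mapping"
begin

text \<open>
Everything is homologically graded over the
integers, differentials have degree -1.  A graded k-module is an abelian group
type together with a scalar action and a family of projections onto the
homogeneous components (a direct sum decomposition).  Hom^n(C,A) (cohomological
degree n) consists of the k-linear maps of homological degree -n.
Tensor powers of C are represented by formal k-linear combinations of lists
(finitely supported functions on lists), taken modulo the k-submodule generated
by the multilinearity relations (tnull).
\<close>

definition signed :: "int \<Rightarrow> 'x::ab_group_add \<Rightarrow> 'x" where
  "signed p x = (if even p then x else - x)"

definition module_ax :: "('k::comm_ring_1 \<Rightarrow> 'm::ab_group_add \<Rightarrow> 'm) \<Rightarrow> bool" where
  "module_ax sm \<longleftrightarrow>
     (\<forall>r x y. sm r (x + y) = sm r x + sm r y) \<and>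
     (\<forall>r s x. sm (r + s) x = sm r x + sm s x) \<and>
     (\<forall>r s x. sm (r * s) x = sm r (sm s x)) \<and>
     (\<forall>x. sm 1 x = x)"

definition graded_ax :: "('k::comm_ring_1 \<Rightarrow> 'm::ab_group_add \<Rightarrow> 'm) \<Rightarrow> (int \<Rightarrow> 'm \<Rightarrow> 'm) \<Rightarrow> bool" where
  "graded_ax sm pr \<longleftrightarrow>
     (\<forall>p x y. pr p (x + y) = pr p x + pr p y) \<and>
     (\<forall>p r x. pr p (sm r x) = sm r (pr p x)) \<and>
     (\<forall>p q x. pr p (pr q x) = (if p = q then pr q x else 0)) \<and>
     (\<forall>x. finite {p. pr p x \<noteq> 0}) \<and>
     (\<forall>x. x = (\<Sum>p\<in>{p. pr p x \<noteq> 0}. pr p x))"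

definition homog :: "(int \<Rightarrow> 'm \<Rightarrow> 'm) \<Rightarrow> int \<Rightarrow> 'm \<Rightarrow> bool" where
  "homog pr n x \<longleftrightarrow> pr n x = x"

definition deg_map ::
  "('k::comm_ring_1 \<Rightarrow> 'm::ab_group_add \<Rightarrow> 'm) \<Rightarrow> (int \<Rightarrow> 'm \<Rightarrow> 'm) \<Rightarrow>
   ('k \<Rightarrow> 'n::ab_group_add \<Rightarrow> 'n) \<Rightarrow> (int \<Rightarrow> 'n \<Rightarrow> 'n) \<Rightarrow> int \<Rightarrow> ('m \<Rightarrow> 'n) \<Rightarrow> bool" where
  "deg_map smM prM smN prN n f \<longleftrightarrow>
     (\<forall>x y. f (x + y) = f x + f y) \<and>
     (\<forall>r x. f (smM r x) = smN r (f x)) \<and>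
     (\<forall>p x. homog prM p x \<longrightarrow> homog prN (p + n) (f x))"

type_synonym ('k, 'c) fsum = "'c list \<Rightarrow>\<^sub>0 'k"

definition fs_smul :: "'k::comm_ring_1 \<Rightarrow> ('k, 'c) fsum \<Rightarrow> ('k, 'c) fsum" where
  "fs_smul r p = Poly_Mapping.map (\<lambda>a. r * a) p"

definition gen :: "'c list \<Rightarrow> ('k::comm_ring_1, 'c) fsum" where
  "gen l = Poly_Mapping.single l 1"

definition fs_ext :: "('k::comm_ring_1 \<Rightarrow> 'v::ab_group_add \<Rightarrow> 'v) \<Rightarrow> ('c list \<Rightarrow> 'v) \<Rightarrow> ('k, 'c) fsum \<Rightarrow> 'v" where
  "fs_ext sm \<phi> p = (\<Sum>l\<in>Poly_Mapping.keys p. sm (Poly_Mapping.lookup p l) (\<phi> l))"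

text \<open>The k-submodule of multilinearity relations; the tensor algebra T(C) is the
  quotient of the free module on lists by it (lists of length n give C^{\<otimes>n}).\<close>
inductive_set tnull :: "('k::comm_ring_1 \<Rightarrow> 'c::ab_group_add \<Rightarrow> 'c) \<Rightarrow> ('k, 'c) fsum set"
  for sm where
  tn_zero: "0 \<in> tnull sm"
| tn_add: "a \<in> tnull sm \<Longrightarrow> b \<in> tnull sm \<Longrightarrow> a + b \<in> tnull sm"
| tn_smul: "a \<in> tnull sm \<Longrightarrow> fs_smul r a \<in> tnull sm"
| tn_additive: "gen (xs @ (x + y) # ys) - gen (xs @ x # ys) - gen (xs @ y # ys) \<in> tnull sm"
| tn_homog: "gen (xs @ sm r x # ys) - fs_smul r (gen (xs @ x # ys)) \<in> tnull sm"

definition teq :: "('k::comm_ring_1 \<Rightarrow> 'c::ab_group_add \<Rightarrow> 'c) \<Rightarrow> ('k, 'c) fsum \<Rightarrow> ('k, 'c) fsum \<Rightarrow> bool" where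
  "teq sm p q \<longleftrightarrow> p - q \<in> tnull sm"

definition graded_tensor :: "(int \<Rightarrow> 'c \<Rightarrow> 'c::ab_group_add) \<Rightarrow> int \<Rightarrow> ('k::comm_ring_1, 'c) fsum \<Rightarrow> bool" where
  "graded_tensor pr n p \<longleftrightarrow>
     (\<forall>l\<in>Poly_Mapping.keys p. \<exists>ds. length ds = length l \<and> (\<forall>i<length l. homog pr (ds ! i) (l ! i)) \<and> sum_list ds = n)"

record ('k, 'a) dga =
  a_smul :: "'k \<Rightarrow> 'a \<Rightarrow> 'a"
  a_proj :: "int \<Rightarrow> 'a \<Rightarrow> 'a"
  a_d :: "'a \<Rightarrow> 'a"
  a_eps :: "'a \<Rightarrow> 'k"

definition aug_dga :: "('k::comm_ring_1, 'a::ring_1) dga \<Rightarrow> bool" where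
  "aug_dga A \<longleftrightarrow>
     module_ax (a_smul A) \<and> graded_ax (a_smul A) (a_proj A) \<and>
     (\<forall>r a b. a_smul A r (a * b) = a_smul A r a * b) \<and>
     (\<forall>r a b. a_smul A r (a * b) = a * a_smul A r b) \<and>
     homog (a_proj A) 0 1 \<and>
     (\<forall>p q a b. homog (a_proj A) p a \<longrightarrow> homog (a_proj A) q b \<longrightarrow> homog (a_proj A) (p + q) (a * b)) \<and>
     deg_map (a_smul A) (a_proj A) (a_smul A) (a_proj A) (-1) (a_d A) \<and>
     (\<forall>a. a_d A (a_d A a) = 0) \<and>
     (\<forall>p a b. homog (a_proj A) p a \<longrightarrow> a_d A (a * b) = a_d A a * b + signed p (a * a_d A b)) \<and>
     (\<forall>a b. a_eps A (a + b) = a_eps A a + a_eps A b) \<and>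
     (\<forall>r a. a_eps A (a_smul A r a) = r * a_eps A a) \<and>
     (\<forall>a b. a_eps A (a * b) = a_eps A a * a_eps A b) \<and>
     a_eps A 1 = 1 \<and>
     (\<forall>p a. p \<noteq> 0 \<longrightarrow> a_eps A (a_proj A p a) = 0) \<and>
     (\<forall>a. a_eps A (a_d A a) = 0)"

definition dg_ideal :: "('k::comm_ring_1, 'a::ring_1) dga \<Rightarrow> 'a set \<Rightarrow> bool" where
  "dg_ideal A I \<longleftrightarrow>
     0 \<in> I \<and> (\<forall>x\<in>I. \<forall>y\<in>I. x + y \<in> I) \<and> (\<forall>x\<in>I. - x \<in> I) \<and>
     (\<forall>r. \<forall>x\<in>I. a_smul A r x \<in> I) \<and>
     (\<forall>a. \<forall>x\<in>I. a * x \<in> I \<and> x * a \<in> I) \<and>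
     (\<forall>x\<in>I. a_d A x \<in> I) \<and>
     (\<forall>p. \<forall>x\<in>I. a_proj A p x \<in> I)"

record (overloaded) ('k::zero, 'c) dgc =
  c_smul :: "'k \<Rightarrow> 'c \<Rightarrow> 'c"
  c_proj :: "int \<Rightarrow> 'c \<Rightarrow> 'c"
  c_d :: "'c \<Rightarrow> 'c"
  c_Delta :: "'c \<Rightarrow> ('k, 'c) fsum"
  c_eps :: "'c \<Rightarrow> 'k"
  c_unit :: "'c"  \<comment> \<open>the coaugmentation \<eta>_C is r \<mapsto> r \<cdot> c_unit\<close>

definition Delta_left :: "('k::comm_ring_1, 'c) dgc \<Rightarrow> 'c list \<Rightarrow> ('k, 'c) fsum" where
  "Delta_left C l = fs_ext fs_smul (\<lambda>m. gen (m @ tl l)) (c_Delta C (hd l))"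

definition Delta_right :: "('k::comm_ring_1, 'c) dgc \<Rightarrow> 'c list \<Rightarrow> ('k, 'c) fsum" where
  "Delta_right C l = fs_ext fs_smul (\<lambda>m. gen (hd l # m)) (c_Delta C (l ! 1))"

text \<open>d \<otimes> 1 + 1 \<otimes> d on a generator [x,y] (Koszul sign).\<close>
definition d_tensor2 :: "('k::comm_ring_1, 'c::ab_group_add) dgc \<Rightarrow> 'c list \<Rightarrow> ('k, 'c) fsum" where
  "d_tensor2 C l = gen [c_d C (l ! 0), l ! 1] +
     (\<Sum>p\<in>{p. c_proj C p (l ! 0) \<noteq> 0}. signed p (gen [c_proj C p (l ! 0), c_d C (l ! 1)]))"

definition coaug_dgc :: "('k::comm_ring_1, 'c::ab_group_add) dgc \<Rightarrow> bool" where
  "coaug_dgc C \<longleftrightarrow>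
     module_ax (c_smul C) \<and> graded_ax (c_smul C) (c_proj C) \<and>
     deg_map (c_smul C) (c_proj C) (c_smul C) (c_proj C) (-1) (c_d C) \<and>
     (\<forall>x. c_d C (c_d C x) = 0) \<and>
     (\<forall>x. \<forall>l\<in>Poly_Mapping.keys (c_Delta C x). length l = 2) \<and>
     (\<forall>x y. teq (c_smul C) (c_Delta C (x + y)) (c_Delta C x + c_Delta C y)) \<and>
     (\<forall>r x. teq (c_smul C) (c_Delta C (c_smul C r x)) (fs_smul r (c_Delta C x))) \<and>
     (\<forall>n x. homog (c_proj C) n x \<longrightarrow>
        (\<exists>q. teq (c_smul C) (c_Delta C x) q \<and> graded_tensor (c_proj C) n q)) \<and>
     (\<forall>x. teq (c_smul C) (fs_ext fs_smul (Delta_left C) (c_Delta C x))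
                         (fs_ext fs_smul (Delta_right C) (c_Delta C x))) \<and>
     (\<forall>x. teq (c_smul C) (c_Delta C (c_d C x)) (fs_ext fs_smul (d_tensor2 C) (c_Delta C x))) \<and>
     (\<forall>x y. c_eps C (x + y) = c_eps C x + c_eps C y) \<and>
     (\<forall>r x. c_eps C (c_smul C r x) = r * c_eps C x) \<and>
     (\<forall>p x. p \<noteq> 0 \<longrightarrow> c_eps C (c_proj C p x) = 0) \<and>
     (\<forall>x. c_eps C (c_d C x) = 0) \<and>
     (\<forall>x. fs_ext (c_smul C) (\<lambda>l. c_smul C (c_eps C (l ! 0)) (l ! 1)) (c_Delta C x) = x) \<and>
     (\<forall>x. fs_ext (c_smul C) (\<lambda>l. c_smul C (c_eps C (l ! 1)) (l ! 0)) (c_Delta C x) = x) \<and>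
     homog (c_proj C) 0 (c_unit C) \<and> c_d C (c_unit C) = 0 \<and> c_eps C (c_unit C) = 1 \<and>
     teq (c_smul C) (c_Delta C (c_unit C)) (gen [c_unit C, c_unit C])"

text \<open>Iterated diagonal: Delta_iter n c \<in> C^{\<otimes>(n+1)}.\<close>
primrec Delta_iter :: "('k::comm_ring_1, 'c) dgc \<Rightarrow> nat \<Rightarrow> 'c \<Rightarrow> ('k, 'c) fsum" where
  "Delta_iter C 0 c = gen [c]"
| "Delta_iter C (Suc n) c = fs_ext fs_smul (Delta_left C) (Delta_iter C n c)"

definition cocomplete :: "('k::comm_ring_1, 'c::ab_group_add) dgc \<Rightarrow> bool" where
  "cocomplete C \<longleftrightarrow>
     (\<forall>c. \<exists>n. fs_ext fs_smul (\<lambda>l. gen (map (\<lambda>x. x - c_smul C (c_eps C x) (c_unit C)) l))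
                 (Delta_iter C n c) \<in> tnull (c_smul C))"

definition hom_deg :: "('k::comm_ring_1, 'c::ab_group_add) dgc \<Rightarrow> ('k, 'a::ring_1) dga \<Rightarrow> int \<Rightarrow> ('c \<Rightarrow> 'a) \<Rightarrow> bool" where
  "hom_deg C A n f \<longleftrightarrow> deg_map (c_smul C) (c_proj C) (a_smul A) (a_proj A) n f"

text \<open>Cup product f \<union> g = \<mu>_A (f \<otimes> g) \<Delta>_C, where n is the degree of g
  (Koszul sign (f \<otimes> g)(x \<otimes> y) = (-1)^{|g||x|} f x \<otimes> g y).\<close>
definition cup :: "('k::comm_ring_1, 'c::ab_group_add) dgc \<Rightarrow> ('k, 'a::ring_1) dga \<Rightarrow> int \<Rightarrow>
                   ('c \<Rightarrow> 'a) \<Rightarrow> ('c \<Rightarrow> 'a) \<Rightarrow> 'c \<Rightarrow> 'a" where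
  "cup C A n f g c = fs_ext (a_smul A)
     (\<lambda>l. \<Sum>p\<in>{p. c_proj C p (l ! 0) \<noteq> 0}. signed (n * p) (f (c_proj C p (l ! 0)) * g (l ! 1)))
     (c_Delta C c)"

definition hom_d :: "('k::comm_ring_1, 'c::ab_group_add) dgc \<Rightarrow> ('k, 'a::ring_1) dga \<Rightarrow> int \<Rightarrow>
                     ('c \<Rightarrow> 'a) \<Rightarrow> 'c \<Rightarrow> 'a" where
  "hom_d C A n f c = a_d A (f c) - signed n (f (c_d C c))"

definition hom_one :: "('k::comm_ring_1, 'c::ab_group_add) dgc \<Rightarrow> ('k, 'a::ring_1) dga \<Rightarrow> 'c \<Rightarrow> 'a" where
  "hom_one C A c = a_smul A (c_eps C c) 1"

primrec cup_pow :: "('k::comm_ring_1, 'c::ab_group_add) dgc \<Rightarrow> ('k, 'a::ring_1) dga \<Rightarrow>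
                    ('c \<Rightarrow> 'a) \<Rightarrow> nat \<Rightarrow> 'c \<Rightarrow> 'a" where
  "cup_pow C A f 0 = hom_one C A"
| "cup_pow C A f (Suc n) = cup C A 0 f (cup_pow C A f n)"

text \<open>Pointwise-finite series \<Sum>_n F n (meaningful when for each c the terms
  F n c eventually vanish).\<close>
definition series :: "(nat \<Rightarrow> 'c \<Rightarrow> 'a::ab_group_add) \<Rightarrow> 'c \<Rightarrow> 'a" where
  "series F c = (\<Sum>n < (LEAST N. \<forall>m\<ge>N. F m c = 0). F n c)"

definition twisting :: "('k::comm_ring_1, 'c::ab_group_add) dgc \<Rightarrow> ('k, 'a::ring_1) dga \<Rightarrow> ('c \<Rightarrow> 'a) \<Rightarrow> bool" where
  "twisting C A t \<longleftrightarrow>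
     hom_deg C A (-1) t \<and>
     hom_d C A (-1) t = cup C A (-1) t t \<and>
     (\<forall>c. a_eps A (t c) = 0) \<and>
     (\<forall>r. t (c_smul C r (c_unit C)) = 0)"

definition tc_homotopy :: "('k::comm_ring_1, 'c::ab_group_add) dgc \<Rightarrow> ('k, 'a::ring_1) dga \<Rightarrow>
                           ('c \<Rightarrow> 'a) \<Rightarrow> ('c \<Rightarrow> 'a) \<Rightarrow> ('c \<Rightarrow> 'a) \<Rightarrow> bool" where
  "tc_homotopy C A t u h \<longleftrightarrow>
     hom_deg C A 0 h \<and>
     hom_d C A 0 h = (\<lambda>c. cup C A 0 t h c - cup C A (-1) h u c) \<and>
     (\<forall>c. a_eps A (h c) = c_eps C c) \<and>
     (\<forall>r. h (c_smul C r (c_unit C)) = a_smul A r 1)"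

definition trivial_mod :: "('k::comm_ring_1, 'c::ab_group_add) dgc \<Rightarrow> ('k, 'a::ring_1) dga \<Rightarrow> 'a set \<Rightarrow> ('c \<Rightarrow> 'a) \<Rightarrow> bool" where
  "trivial_mod C A I h \<longleftrightarrow> (\<forall>c. h c - hom_one C A c \<in> I)"

definition triv_homotopic :: "('k::comm_ring_1, 'c::ab_group_add) dgc \<Rightarrow> ('k, 'a::ring_1) dga \<Rightarrow> 'a set \<Rightarrow>
                              ('c \<Rightarrow> 'a) \<Rightarrow> ('c \<Rightarrow> 'a) \<Rightarrow> bool" where
  "triv_homotopic C A I t u \<longleftrightarrow> (\<exists>h. tc_homotopy C A t u h \<and> trivial_mod C A I h)"

end

theory Submission
  imports Defs
begin


lemma additive_zero:
  fixes F :: "'a::ab_group_add \<Rightarrow> 'b::ab_group_add"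
  assumes "\<And>x y. F (x + y) = F x + F y"
  shows "F 0 = 0"
  using assms[of 0 0] by simp

lemma additive_sum:
  fixes F :: "'a::ab_group_add \<Rightarrow> 'b::ab_group_add"
  assumes "\<And>x y. F (x + y) = F x + F y"
  shows "F (sum f S) = (\<Sum>i\<in>S. F (f i))"
proof (cases "finite S")
  case True then show ?thesis
    by (induction S rule: finite_induct) (simp_all add: assms additive_zero[OF assms])
next
  case False then show ?thesis by (simp add: additive_zero[OF assms])
qed

lemma additive_minus:
  fixes F :: "'a::ab_group_add \<Rightarrow> 'b::ab_group_add"
  assumes "\<And>x y. F (x + y) = F x + F y"
  shows "F (- x) = - F x"
proof -
  have "F x + F (- x) = 0" using assms[of x "-x"] additive_zero[OF assms] by simp
  then show ?thesis by (metis minus_unique)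
qed

lemma additive_diff:
  fixes F :: "'a::ab_group_add \<Rightarrow> 'b::ab_group_add"
  assumes "\<And>x y. F (x + y) = F x + F y"
  shows "F (x - y) = F x - F y"
  using assms[of x "-y"] additive_minus[OF assms, of y] by simp

lemma additive_signed:
  fixes F :: "'a::ab_group_add \<Rightarrow> 'b::ab_group_add"
  assumes "\<And>x y. F (x + y) = F x + F y"
  shows "F (signed p x) = signed p (F x)"
  by (simp add: signed_def additive_minus[OF assms])

lemma signed_mult_left: "signed p ((a::'a::ring_1) * b) = signed p a * b"
  by (simp add: signed_def)
lemma signed_mult_right: "signed p ((a::'a::ring_1) * b) = a * signed p b"
  by (simp add: signed_def)
lemma signed_zero[simp]: "signed p 0 = 0" by (simp add: signed_def)
lemma signed_0[simp]: "signed 0 x = x" by (simp add: signed_def)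
lemma signed_signed: "signed p (signed q x) = signed (p + q) x"
  by (simp add: signed_def)
lemma signed_uminus_int: "signed (- p) x = signed p x" by (simp add: signed_def)
lemma signed_sum: "signed p (sum f S) = (\<Sum>i\<in>S. signed p (f i))"
  by (simp add: signed_def sum_negf)

lemma lookup_fs_smul: "Poly_Mapping.lookup (fs_smul r p) l = r * Poly_Mapping.lookup p l"
  by (simp add: fs_smul_def Poly_Mapping.map.rep_eq when_def)

lemma keys_fs_smul: "Poly_Mapping.keys (fs_smul r p) \<subseteq> Poly_Mapping.keys p"
  by (auto simp: in_keys_iff lookup_fs_smul)

lemma fs_ext_cong:
  "(\<And>l. l \<in> Poly_Mapping.keys p \<Longrightarrow> \<phi> l = \<psi> l) \<Longrightarrow> fs_ext sm \<phi> p = fs_ext sm \<psi> p"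
  unfolding fs_ext_def by (rule sum.cong) auto

lemma fs_ext_lin:
  assumes "\<And>x y. F (x + y) = F x + F y" and "\<And>r x. F (sm r x) = sm' r (F x)"
  shows "F (fs_ext sm \<phi> p) = fs_ext sm' (\<lambda>l. F (\<phi> l)) p"
  unfolding fs_ext_def by (simp add: additive_sum[OF assms(1)] assms(2))

locale modl =
  fixes sm :: "'k::comm_ring_1 \<Rightarrow> 'm::ab_group_add \<Rightarrow> 'm"
  assumes max: "module_ax sm"
begin

lemma add: "sm r (x + y) = sm r x + sm r y" using max by (simp add: module_ax_def)
lemma addr: "sm (r + s) x = sm r x + sm s x" using max by (simp add: module_ax_def)
lemma mult: "sm (r * s) x = sm r (sm s x)" using max by (simp add: module_ax_def)
lemma one[simp]: "sm 1 x = x" using max by (simp add: module_ax_def)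
lemma zero_right[simp]: "sm r 0 = 0" using add[of r 0 0] by simp
lemma zero_left[simp]: "sm 0 x = 0" using addr[of 0 0 x] by simp
lemma minus: "sm r (- x) = - sm r x" by (rule additive_minus) (rule add)
lemma diff: "sm r (x - y) = sm r x - sm r y" by (rule additive_diff) (rule add)
lemma sum: "sm r (sum f S) = (\<Sum>i\<in>S. sm r (f i))" by (rule additive_sum) (rule add)
lemma signed: "sm r (signed p x) = signed p (sm r x)" by (rule additive_signed) (rule add)
lemma minusr: "sm (- r) x = - sm r x"
proof -
  have "sm r x + sm (- r) x = 0" using addr[of r "-r" x] by simp
  then show ?thesis by (metis minus_unique)
qed

lemma fs_ext_superset:
  assumes "finite S" "Poly_Mapping.keys p \<subseteq> S"
  shows "fs_ext sm \<phi> p = (\<Sum>l\<in>S. sm (Poly_Mapping.lookup p l) (\<phi> l))"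
  unfolding fs_ext_def
  by (rule sum.mono_neutral_left) (use assms in \<open>auto simp: in_keys_iff\<close>)

lemma fs_ext_add: "fs_ext sm \<phi> (p + q) = fs_ext sm \<phi> p + fs_ext sm \<phi> q"
proof -
  let ?S = "Poly_Mapping.keys p \<union> Poly_Mapping.keys q"
  have "fs_ext sm \<phi> (p + q) = (\<Sum>l\<in>?S. sm (Poly_Mapping.lookup (p+q) l) (\<phi> l))"
    by (rule fs_ext_superset) (auto simp: keys_add)
  also have "\<dots> = (\<Sum>l\<in>?S. sm (Poly_Mapping.lookup p l) (\<phi> l)) + (\<Sum>l\<in>?S. sm (Poly_Mapping.lookup q l) (\<phi> l))"
    by (simp add: lookup_add addr sum.distrib)
  also have "\<dots> = fs_ext sm \<phi> p + fs_ext sm \<phi> q"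
    by (subst (1 2) fs_ext_superset[of ?S]) auto
  finally show ?thesis .
qed

lemma fs_ext_zero[simp]: "fs_ext sm \<phi> 0 = 0" by (simp add: fs_ext_def)

lemma fs_ext_gen[simp]: "fs_ext sm \<phi> (gen l) = \<phi> l"
  by (simp add: fs_ext_def gen_def)

lemma fs_ext_smul: "fs_ext sm \<phi> (fs_smul r p) = sm r (fs_ext sm \<phi> p)"
proof -
  have "fs_ext sm \<phi> (fs_smul r p) = (\<Sum>l\<in>Poly_Mapping.keys p. sm (Poly_Mapping.lookup (fs_smul r p) l) (\<phi> l))"
    by (rule fs_ext_superset) (auto simp: keys_fs_smul[THEN subsetD])
  then show ?thesis by (simp add: lookup_fs_smul mult fs_ext_def sum)
qed

lemma fs_ext_uminus: "fs_ext sm \<phi> (- p) = - fs_ext sm \<phi> p"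
  by (rule additive_minus) (rule fs_ext_add)
lemma fs_ext_diff: "fs_ext sm \<phi> (p - q) = fs_ext sm \<phi> p - fs_ext sm \<phi> q"
  by (rule additive_diff) (rule fs_ext_add)
lemma fs_ext_sum: "fs_ext sm \<phi> (sum P I) = (\<Sum>i\<in>I. fs_ext sm \<phi> (P i))"
  by (rule additive_sum) (rule fs_ext_add)
lemma fs_ext_signed: "fs_ext sm \<phi> (signed p x) = signed p (fs_ext sm \<phi> x)"
  by (rule additive_signed) (rule fs_ext_add)

lemma fs_ext_fadd: "fs_ext sm (\<lambda>l. \<phi> l + \<psi> l) p = fs_ext sm \<phi> p + fs_ext sm \<psi> p"
  by (simp add: fs_ext_def add sum.distrib)
lemma fs_ext_fzero[simp]: "fs_ext sm (\<lambda>l. 0) p = 0"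
  by (simp add: fs_ext_def)
lemma fs_ext_fminus: "fs_ext sm (\<lambda>l. - \<phi> l) p = - fs_ext sm \<phi> p"
  by (simp add: fs_ext_def minus sum_negf)
lemma fs_ext_fdiff: "fs_ext sm (\<lambda>l. \<phi> l - \<psi> l) p = fs_ext sm \<phi> p - fs_ext sm \<psi> p"
  by (simp add: fs_ext_def diff sum_subtractf)
lemma fs_ext_fsum: "fs_ext sm (\<lambda>l. \<Sum>i\<in>I. \<phi> i l) p = (\<Sum>i\<in>I. fs_ext sm (\<phi> i) p)"
  unfolding fs_ext_def by (simp add: sum) (rule sum.swap)

lemma fs_ext_closed:
  assumes "0 \<in> X" "\<And>x y. x \<in> X \<Longrightarrow> y \<in> X \<Longrightarrow> x + y \<in> X" "\<And>r x. x \<in> X \<Longrightarrow> sm r x \<in> X"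
    "\<And>l. l \<in> Poly_Mapping.keys p \<Longrightarrow> \<phi> l \<in> X"
  shows "fs_ext sm \<phi> p \<in> X"
proof -
  have "\<And>S. finite S \<Longrightarrow> S \<subseteq> Poly_Mapping.keys p \<Longrightarrow> (\<Sum>l\<in>S. sm (Poly_Mapping.lookup p l) (\<phi> l)) \<in> X"
  proof -
    fix S assume "finite S" "S \<subseteq> Poly_Mapping.keys p"
    then show "(\<Sum>l\<in>S. sm (Poly_Mapping.lookup p l) (\<phi> l)) \<in> X"
      by (induction S rule: finite_induct) (auto intro: assms)
  qed
  then show ?thesis unfolding fs_ext_def by simp
qed

lemma fs_ext_comp:
  "fs_ext sm \<phi> (fs_ext fs_smul \<psi> p) = fs_ext sm (\<lambda>l. fs_ext sm \<phi> (\<psi> l)) p"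
  unfolding fs_ext_def[of fs_smul] by (simp add: fs_ext_sum fs_ext_smul fs_ext_def[of sm _ p])

lemma fs_ext_tnull:
  assumes "\<And>xs x y ys. \<phi> (xs @ (x + y) # ys) = \<phi> (xs @ x # ys) + \<phi> (xs @ y # ys)"
    and "\<And>xs r x ys. \<phi> (xs @ smC r x # ys) = sm r (\<phi> (xs @ x # ys))"
    and "q \<in> tnull smC"
  shows "fs_ext sm \<phi> q = 0"
  using assms(3)
proof induction
  case (tn_add a b) then show ?case by (simp add: fs_ext_add)
next
  case (tn_smul a r) then show ?case by (simp add: fs_ext_smul)
next
  case (tn_additive xs x y ys) then show ?case by (simp add: fs_ext_diff assms(1))
next
  case (tn_homog xs r x ys) then show ?case by (simp add: fs_ext_diff fs_ext_smul assms(2))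
qed simp

lemma fs_ext_teq:
  assumes "\<And>xs x y ys. \<phi> (xs @ (x + y) # ys) = \<phi> (xs @ x # ys) + \<phi> (xs @ y # ys)"
    and "\<And>xs r x ys. \<phi> (xs @ smC r x # ys) = sm r (\<phi> (xs @ x # ys))"
    and "teq smC p q"
  shows "fs_ext sm \<phi> p = fs_ext sm \<phi> q"
  using fs_ext_tnull[OF assms(1,2), of "p - q"] assms(3) by (simp add: teq_def fs_ext_diff)

end



lemma len1E: assumes "length l = Suc 0" obtains a where "l = [a]"
  using assms by (metis length_0_conv length_Suc_conv)
lemma len2E: assumes "length l = 2" obtains a b where "l = [a, b]"
  using assms by (metis length_0_conv length_Suc_conv numeral_2_eq_2)
lemma list2_split:
  "length (xs @ z # ys) = 2 \<longleftrightarrow> (xs = [] \<and> length ys = 1) \<or> (length xs = 1 \<and> ys = [])"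
  by (cases xs; cases ys) auto
lemma list3_split:
  "length (xs @ z # ys) = 3 \<longleftrightarrow> (xs = [] \<and> length ys = 2) \<or> (length xs = 1 \<and> length ys = 1) \<or> (length xs = 2 \<and> ys = [])"
  unfolding length_0_conv[symmetric] length_append list.size by arith

lemma len3E: assumes "length l = 3" obtains a b c where "l = [a, b, c]"
  using assms by (metis length_0_conv length_Suc_conv numeral_3_eq_3)

locale setting =
  fixes A :: "('k::comm_ring_1, 'a::ring_1) dga" and C :: "('k, 'c::ab_group_add) dgc"
  assumes aug: "aug_dga A" and coaug: "coaug_dgc C"
begin

abbreviation "smA \<equiv> a_smul A"
abbreviation "prA \<equiv> a_proj A"
abbreviation "dA \<equiv> a_d A"
abbreviation "epsA \<equiv> a_eps A"
abbreviation "smC \<equiv> c_smul C"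
abbreviation "prC \<equiv> c_proj C"
abbreviation "dC \<equiv> c_d C"
abbreviation "Dl \<equiv> c_Delta C"
abbreviation "epsC \<equiv> c_eps C"
abbreviation "uC \<equiv> c_unit C"

sublocale mA: modl smA using aug by (simp add: aug_dga_def modl_def)
sublocale mC: modl smC using coaug by (simp add: coaug_dgc_def modl_def)

lemma mK: "modl ((*) :: 'k \<Rightarrow> 'k \<Rightarrow> 'k)"
  by (simp add: modl_def module_ax_def algebra_simps)

lemma smA_mult_left: "smA r (a * b) = smA r a * b" using aug by (simp add: aug_dga_def)
lemma smA_mult_right_all: "\<forall>r a b. smA r (a * b) = a * smA r b"
  using aug unfolding aug_dga_def by (elim conjE) assumption
lemma smA_mult_right: "smA r (a * b) = a * smA r b" using smA_mult_right_all by blast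

lemma grA: "graded_ax smA prA" using aug by (simp add: aug_dga_def)
lemma grC: "graded_ax smC prC" using coaug by (simp add: coaug_dgc_def)

lemma prA_add: "prA p (x + y) = prA p x + prA p y" using grA by (simp add: graded_ax_def)
lemma prA_smul: "prA p (smA r x) = smA r (prA p x)" using grA by (simp add: graded_ax_def)
lemma prC_add: "prC p (x + y) = prC p x + prC p y" using grC by (simp add: graded_ax_def)
lemma prC_smul: "prC p (smC r x) = smC r (prC p x)" using grC by (simp add: graded_ax_def)
lemma prC_prC: "prC p (prC q x) = (if p = q then prC q x else 0)" using grC by (simp add: graded_ax_def)
lemma prC_fin[simp]: "finite {p. prC p x \<noteq> 0}" using grC by (simp add: graded_ax_def)
lemma prC_decomp: "x = (\<Sum>p\<in>{p. prC p x \<noteq> 0}. prC p x)" using grC by (simp add: graded_ax_def)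
lemma prC_zero[simp]: "prC p 0 = 0" by (rule additive_zero) (rule prC_add)
lemma prA_zero[simp]: "prA p 0 = 0" by (rule additive_zero) (rule prA_add)

lemma homogA_add: "homog prA p x \<Longrightarrow> homog prA p y \<Longrightarrow> homog prA p (x + y)"
  by (simp add: homog_def prA_add)
lemma homogA_smul: "homog prA p x \<Longrightarrow> homog prA p (smA r x)"
  by (simp add: homog_def prA_smul)
lemma homogA_zero: "homog prA p 0" by (simp add: homog_def)
lemma homogA_mult: "homog prA p a \<Longrightarrow> homog prA q b \<Longrightarrow> homog prA (p + q) (a * b)"
  using aug by (simp add: aug_dga_def)
lemma homogA_one: "homog prA 0 1" using aug by (simp add: aug_dga_def)
lemma homogC_pr: "homog prC p (prC p x)" by (simp add: homog_def prC_prC)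

lemma dA_lin: "deg_map smA prA smA prA (-1) dA" using aug by (simp add: aug_dga_def)
lemma dA_add: "dA (x + y) = dA x + dA y" using dA_lin by (simp add: deg_map_def)
lemma dA_smul: "dA (smA r x) = smA r (dA x)" using dA_lin by (simp add: deg_map_def)
lemma dA_leibniz: "homog prA p a \<Longrightarrow> dA (a * b) = dA a * b + signed p (a * dA b)"
  using aug by (simp add: aug_dga_def)
lemma dC_lin: "deg_map smC prC smC prC (-1) dC" using coaug by (simp add: coaug_dgc_def)
lemma dC_add: "dC (x + y) = dC x + dC y" using dC_lin by (simp add: deg_map_def)
lemma dC_smul: "dC (smC r x) = smC r (dC x)" using dC_lin by (simp add: deg_map_def)

lemma epsA_add: "epsA (a + b) = epsA a + epsA b" using aug by (simp add: aug_dga_def)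
lemma epsA_smul: "epsA (smA r a) = r * epsA a" using aug by (simp add: aug_dga_def)
lemma epsA_mult: "epsA (a * b) = epsA a * epsA b" using aug by (simp add: aug_dga_def)
lemma epsA_one: "epsA 1 = 1" using aug by (simp add: aug_dga_def)
lemma epsC_add: "epsC (a + b) = epsC a + epsC b" using coaug by (simp add: coaug_dgc_def)
lemma epsC_smul: "epsC (smC r a) = r * epsC a" using coaug by (simp add: coaug_dgc_def)
lemma epsC_pr: "p \<noteq> 0 \<Longrightarrow> epsC (prC p a) = 0" using coaug by (simp add: coaug_dgc_def)
lemma epsC_d: "epsC (dC a) = 0" using coaug by (simp add: coaug_dgc_def)

lemma D_len: "l \<in> Poly_Mapping.keys (Dl x) \<Longrightarrow> length l = 2" using coaug by (simp add: coaug_dgc_def)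
lemma D_add: "teq smC (Dl (x + y)) (Dl x + Dl y)" using coaug by (simp add: coaug_dgc_def)
lemma D_smul: "teq smC (Dl (smC r x)) (fs_smul r (Dl x))" using coaug by (simp add: coaug_dgc_def)
lemma D_graded: "homog prC n x \<Longrightarrow> \<exists>q. teq smC (Dl x) q \<and> graded_tensor prC n q"
  using coaug by (simp add: coaug_dgc_def)
lemma D_coassoc: "teq smC (fs_ext fs_smul (Delta_left C) (Dl x)) (fs_ext fs_smul (Delta_right C) (Dl x))"
  using coaug by (simp add: coaug_dgc_def)
lemma D_d: "teq smC (Dl (dC x)) (fs_ext fs_smul (d_tensor2 C) (Dl x))"
  using coaug by (simp add: coaug_dgc_def)
lemma counitL: "fs_ext smC (\<lambda>l. smC (epsC (l ! 0)) (l ! 1)) (Dl x) = x"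
  using coaug by (simp add: coaug_dgc_def)
lemma counitR: "fs_ext smC (\<lambda>l. smC (epsC (l ! 1)) (l ! 0)) (Dl x) = x"
  using coaug by (simp add: coaug_dgc_def)
lemma unit_homog: "homog prC 0 uC" using coaug by (simp add: coaug_dgc_def)
lemma unit_d: "dC uC = 0" using coaug by (simp add: coaug_dgc_def)
lemma unit_eps: "epsC uC = 1" using coaug by (simp add: coaug_dgc_def)
lemma D_unit: "teq smC (Dl uC) (gen [uC, uC])" using coaug by (simp add: coaug_dgc_def)

lemma epsC_decomp: "epsC x = epsC (prC 0 x)"
proof -
  have "epsC x = (\<Sum>p\<in>{p. prC p x \<noteq> 0}. epsC (prC p x))"
    by (subst prC_decomp) (rule additive_sum, rule epsC_add)
  also have "\<dots> = (\<Sum>p\<in>{p. prC p x \<noteq> 0} \<inter> {0}. epsC (prC p x))"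
    by (rule sum.mono_neutral_right) (use epsC_pr in auto)
  also have "\<dots> = epsC (prC 0 x)"
    by (cases "prC 0 x = 0") (auto simp: additive_zero[of epsC, OF epsC_add])
  finally show ?thesis .
qed

definition lin :: "('c \<Rightarrow> 'a) \<Rightarrow> bool" where
  "lin f \<longleftrightarrow> (\<forall>x y. f (x + y) = f x + f y) \<and> (\<forall>r x. f (smC r x) = smA r (f x))"

lemma linD: assumes "lin f" shows lin_add: "f (x + y) = f x + f y" and lin_smul: "f (smC r x) = smA r (f x)"
  using assms by (auto simp: lin_def)
lemma lin_zero: "lin f \<Longrightarrow> f 0 = 0" by (rule additive_zero) (rule lin_add)
lemma lin_minus: "lin f \<Longrightarrow> f (- x) = - f x" by (rule additive_minus) (rule lin_add)
lemma lin_diff: "lin f \<Longrightarrow> f (x - y) = f x - f y" by (rule additive_diff) (rule lin_add)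
lemma lin_sum: "lin f \<Longrightarrow> f (sum g S) = (\<Sum>i\<in>S. f (g i))" by (rule additive_sum) (rule lin_add)

lemma lin_fadd: "lin f \<Longrightarrow> lin g \<Longrightarrow> lin (\<lambda>x. f x + g x)"
  by (simp add: lin_def mA.add)
lemma lin_fminus: "lin f \<Longrightarrow> lin (\<lambda>x. - f x)"
  by (simp add: lin_def mA.minus)
lemma lin_fdiff: "lin f \<Longrightarrow> lin g \<Longrightarrow> lin (\<lambda>x. f x - g x)"
  by (simp add: lin_def mA.diff)
lemma lin_fsum: "(\<And>i. i \<in> I \<Longrightarrow> lin (f i)) \<Longrightarrow> lin (\<lambda>x. \<Sum>i\<in>I. f i x)"
  by (simp add: lin_def mA.sum sum.distrib)

lemma lin_hom_deg: "hom_deg C A n f \<Longrightarrow> lin f"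
  by (simp add: hom_deg_def deg_map_def lin_def)

definition one :: "'c \<Rightarrow> 'a" where "one = hom_one C A"

lemma one_apply: "one x = smA (epsC x) 1" by (simp add: one_def hom_one_def)

lemma lin_one: "lin one"
  by (simp add: lin_def one_apply epsC_add epsC_smul mA.addr mA.mult)

definition phi2 :: "('c \<Rightarrow> 'a) \<Rightarrow> ('c \<Rightarrow> 'a) \<Rightarrow> 'c list \<Rightarrow> 'a" where
  "phi2 f g l = (if length l = 2 then f (l ! 0) * g (l ! 1) else 0)"

lemma phi2_simp[simp]: "phi2 f g [a, b] = f a * g b" by (simp add: phi2_def)

lemma list2_cases:
  obtains (L) b where "xs = []" "ys = [b]" | (R) a where "xs = [a]" "ys = []"
    | (N) "length xs + length ys \<noteq> 1"
proof (cases "xs = [] \<and> length ys = 1")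
  case True
  then have "xs = []" "length ys = Suc 0" by simp_all
  moreover obtain b where "ys = [b]" using len1E[OF \<open>length ys = Suc 0\<close>] by blast
  ultimately show ?thesis using that(1) by blast
next
  case F1: False
  show ?thesis
  proof (cases "length xs = 1 \<and> ys = []")
    case True
    then have "ys = []" "length xs = Suc 0" by simp_all
    moreover obtain a where "xs = [a]" using len1E[OF \<open>length xs = Suc 0\<close>] by blast
    ultimately show ?thesis using that(2) by blast
  next
    case False
    have "length xs + length ys \<noteq> 1" using F1 False by (cases xs; cases ys) auto
    then show ?thesis by (rule that(3))
  qed
qed

lemma phi2_multilin:
  assumes f: "lin f" and g: "lin g"
  shows "phi2 f g (xs @ (x + y) # ys) = phi2 f g (xs @ x # ys) + phi2 f g (xs @ y # ys) \<and>
     phi2 f g (xs @ smC r x # ys) = smA r (phi2 f g (xs @ x # ys))"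
proof (cases xs ys rule: list2_cases)
  case (L b) then show ?thesis
    by (simp add: phi2_def lin_add[OF f] lin_smul[OF f] distrib_right smA_mult_left)
next
  case (R a) then show ?thesis
    by (simp add: phi2_def lin_add[OF g] lin_smul[OF g] distrib_left smA_mult_right)
next
  case N then show ?thesis by (simp add: phi2_def)
qed

lemmas phi2_multilin1 = phi2_multilin[THEN conjunct1] and phi2_multilin2 = phi2_multilin[THEN conjunct2]

lemma phi2_teq: "lin f \<Longrightarrow> lin g \<Longrightarrow> teq smC p q \<Longrightarrow> fs_ext smA (phi2 f g) p = fs_ext smA (phi2 f g) q"
  by (rule mA.fs_ext_teq) (simp_all add: phi2_multilin1 phi2_multilin2)

definition cupz :: "('c \<Rightarrow> 'a) \<Rightarrow> ('c \<Rightarrow> 'a) \<Rightarrow> 'c \<Rightarrow> 'a" where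
  "cupz f g c = fs_ext smA (phi2 f g) (Dl c)"

lemma lin_cupz: assumes "lin f" "lin g" shows "lin (cupz f g)"
  unfolding lin_def cupz_def
  using phi2_teq[OF assms D_add] phi2_teq[OF assms D_smul]
  by (simp add: mA.fs_ext_add mA.fs_ext_smul)

lemma cupz_local:
  assumes "\<And>l. l \<in> Poly_Mapping.keys (Dl c) \<Longrightarrow> f (l ! 0) = f' (l ! 0) \<and> g (l ! 1) = g' (l ! 1)"
  shows "cupz f g c = cupz f' g' c"
  unfolding cupz_def by (rule fs_ext_cong) (use assms in \<open>auto simp: phi2_def\<close>)

lemma cupz_fadd1: "cupz (\<lambda>x. f x + f' x) g c = cupz f g c + cupz f' g c"
  unfolding cupz_def by (simp add: mA.fs_ext_fadd[symmetric]) (rule fs_ext_cong, simp add: phi2_def distrib_right)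
lemma cupz_fadd2: "cupz f (\<lambda>x. g x + g' x) c = cupz f g c + cupz f g' c"
  unfolding cupz_def by (simp add: mA.fs_ext_fadd[symmetric]) (rule fs_ext_cong, simp add: phi2_def distrib_left)
lemma cupz_fdiff1: "cupz (\<lambda>x. f x - f' x) g c = cupz f g c - cupz f' g c"
  unfolding cupz_def by (simp add: mA.fs_ext_fdiff[symmetric]) (rule fs_ext_cong, simp add: phi2_def left_diff_distrib)
lemma cupz_fdiff2: "cupz f (\<lambda>x. g x - g' x) c = cupz f g c - cupz f g' c"
  unfolding cupz_def by (simp add: mA.fs_ext_fdiff[symmetric]) (rule fs_ext_cong, simp add: phi2_def right_diff_distrib)
lemma cupz_fminus1: "cupz (\<lambda>x. - f x) g c = - cupz f g c"
  unfolding cupz_def by (simp add: mA.fs_ext_fminus[symmetric]) (rule fs_ext_cong, simp add: phi2_def)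
lemma cupz_fminus2: "cupz f (\<lambda>x. - g x) c = - cupz f g c"
  unfolding cupz_def by (simp add: mA.fs_ext_fminus[symmetric]) (rule fs_ext_cong, simp add: phi2_def)
lemma cupz_fsum1: "cupz (\<lambda>x. \<Sum>i\<in>I. f i x) g c = (\<Sum>i\<in>I. cupz (f i) g c)"
  unfolding cupz_def by (simp add: mA.fs_ext_fsum[symmetric]) (rule fs_ext_cong, simp add: phi2_def sum_distrib_right)
lemma cupz_fsum2: "cupz f (\<lambda>x. \<Sum>i\<in>I. g i x) c = (\<Sum>i\<in>I. cupz f (g i) c)"
  unfolding cupz_def by (simp add: mA.fs_ext_fsum[symmetric]) (rule fs_ext_cong, simp add: phi2_def sum_distrib_left)

lemma cupz_one_left: assumes "lin g" shows "cupz one g c = g c"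
proof -
  have "cupz one g c = fs_ext smA (\<lambda>l. g (smC (epsC (l ! 0)) (l ! 1))) (Dl c)"
    unfolding cupz_def
    by (rule fs_ext_cong) (auto elim!: len2E dest!: D_len simp: one_apply lin_smul[OF assms] smA_mult_left[symmetric])
  also have "\<dots> = g (fs_ext smC (\<lambda>l. smC (epsC (l ! 0)) (l ! 1)) (Dl c))"
    by (rule fs_ext_lin[symmetric]) (auto simp: lin_add[OF assms] lin_smul[OF assms])
  also have "\<dots> = g c" by (simp only: counitL)
  finally show ?thesis .
qed

lemma cupz_one_right: assumes "lin g" shows "cupz g one c = g c"
proof -
  have "cupz g one c = fs_ext smA (\<lambda>l. g (smC (epsC (l ! 1)) (l ! 0))) (Dl c)"
    unfolding cupz_def
    by (rule fs_ext_cong) (auto elim!: len2E dest!: D_len simp: one_apply lin_smul[OF assms] smA_mult_right[symmetric])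
  also have "\<dots> = g (fs_ext smC (\<lambda>l. smC (epsC (l ! 1)) (l ! 0)) (Dl c))"
    by (rule fs_ext_lin[symmetric]) (auto simp: lin_add[OF assms] lin_smul[OF assms])
  also have "\<dots> = g c" by (simp only: counitR)
  finally show ?thesis .
qed

lemma cupz_unit: assumes "lin f" "lin g" shows "cupz f g uC = f uC * g uC"
  unfolding cupz_def using phi2_teq[OF assms D_unit] by simp

definition phi3 :: "('c \<Rightarrow> 'a) \<Rightarrow> ('c \<Rightarrow> 'a) \<Rightarrow> ('c \<Rightarrow> 'a) \<Rightarrow> 'c list \<Rightarrow> 'a" where
  "phi3 f g k l = (if length l = 3 then f (l ! 0) * g (l ! 1) * k (l ! 2) else 0)"

lemma list3_cases:
  obtains (A) b c where "xs = []" "ys = [b, c]" | (B) a c where "xs = [a]" "ys = [c]"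
    | (C) a b where "xs = [a, b]" "ys = []" | (N) "length xs + length ys \<noteq> 2"
proof -
  have "length xs + length ys = 2 \<Longrightarrow> (\<exists>b c. xs = [] \<and> ys = [b, c]) \<or> (\<exists>a c. xs = [a] \<and> ys = [c]) \<or> (\<exists>a b. xs = [a, b] \<and> ys = [])"
  proof -
    assume "length xs + length ys = 2"
    then have "(length xs = 0 \<and> length ys = 2) \<or> (length xs = Suc 0 \<and> length ys = Suc 0) \<or> (length xs = 2 \<and> length ys = 0)"
      by arith
    then show ?thesis by (auto elim!: len1E len2E)
  qed
  then show ?thesis using that by blast
qed

lemma phi3_multilin:
  assumes f: "lin f" and g: "lin g" and k: "lin k"
  shows "phi3 f g k (xs @ (x + y) # ys) = phi3 f g k (xs @ x # ys) + phi3 f g k (xs @ y # ys) \<and>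
     phi3 f g k (xs @ smC r x # ys) = smA r (phi3 f g k (xs @ x # ys))"
proof (cases xs ys rule: list3_cases)
  case (A b c)
  have "f (smC r x) * g b * k c = smA r (f x * g b * k c)"
    by (simp add: lin_smul[OF f] smA_mult_left)
  with A show ?thesis by (simp add: phi3_def lin_add[OF f] distrib_right)
next
  case (B a c)
  have "f a * g (smC r x) * k c = smA r (f a * g x * k c)"
    by (simp add: lin_smul[OF g]) (metis smA_mult_left smA_mult_right)
  with B show ?thesis by (simp add: phi3_def lin_add[OF g] distrib_left distrib_right)
next
  case (C a b)
  have "f a * g b * k (smC r x) = smA r (f a * g b * k x)"
    by (simp add: lin_smul[OF k] smA_mult_right)
  with C show ?thesis by (simp add: phi3_def lin_add[OF k] distrib_left)
next
  case N then show ?thesis by (simp add: phi3_def)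
qed

lemmas phi3_multilin1 = phi3_multilin[THEN conjunct1] and phi3_multilin2 = phi3_multilin[THEN conjunct2]

lemma cupz_assoc: assumes f: "lin f" and g: "lin g" and k: "lin k"
  shows "cupz (cupz f g) k c = cupz f (cupz g k) c"
proof -
  have L: "cupz (cupz f g) k c = fs_ext smA (phi3 f g k) (fs_ext fs_smul (Delta_left C) (Dl c))"
    unfolding cupz_def[of "cupz f g"] mA.fs_ext_comp
  proof (rule fs_ext_cong)
    fix l assume "l \<in> Poly_Mapping.keys (Dl c)"
    then obtain w z where l: "l = [w, z]" by (auto dest!: D_len elim!: len2E)
    have "cupz f g w * k z = fs_ext smA (\<lambda>m. phi2 f g m * k z) (Dl w)"
      unfolding cupz_def by (rule fs_ext_lin) (auto simp: distrib_right smA_mult_left)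
    also have "\<dots> = fs_ext smA (\<lambda>m. phi3 f g k (m @ [z])) (Dl w)"
      by (rule fs_ext_cong) (auto dest!: D_len elim!: len2E simp: phi3_def)
    finally show "phi2 (cupz f g) k l = fs_ext smA (phi3 f g k) (Delta_left C l)"
      by (simp add: l Delta_left_def mA.fs_ext_comp)
  qed
  have R: "cupz f (cupz g k) c = fs_ext smA (phi3 f g k) (fs_ext fs_smul (Delta_right C) (Dl c))"
    unfolding cupz_def[of f] mA.fs_ext_comp
  proof (rule fs_ext_cong)
    fix l assume "l \<in> Poly_Mapping.keys (Dl c)"
    then obtain w z where l: "l = [w, z]" by (auto dest!: D_len elim!: len2E)
    have "f w * cupz g k z = fs_ext smA (\<lambda>m. f w * phi2 g k m) (Dl z)"
      unfolding cupz_def by (rule fs_ext_lin) (auto simp: distrib_left smA_mult_right)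
    also have "\<dots> = fs_ext smA (\<lambda>m. phi3 f g k (w # m)) (Dl z)"
      by (rule fs_ext_cong) (auto dest!: D_len elim!: len2E simp: phi3_def mult.assoc)
    finally show "phi2 f (cupz g k) l = fs_ext smA (phi3 f g k) (Delta_right C l)"
      by (simp add: l Delta_right_def mA.fs_ext_comp)
  qed
  show ?thesis unfolding L R
    by (rule mA.fs_ext_teq[OF _ _ D_coassoc]) (simp_all add: phi3_multilin1[OF f g k] phi3_multilin2[OF f g k])
qed

end


lemma signed_add: "signed p ((a::'a::ab_group_add) + b) = signed p a + signed p b"
  by (simp add: signed_def)
lemma signed_prod: "signed (d1 + d2) ((x::'a::ring_1) * y) = signed d1 x * signed d2 y"
  by (auto simp: signed_def)

context setting begin

definition sg :: "('c \<Rightarrow> 'a) \<Rightarrow> 'c \<Rightarrow> 'a" where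
  "sg f x = (\<Sum>p\<in>{p. prC p x \<noteq> 0}. signed p (f (prC p x)))"

lemma sg_superset: assumes "lin f" "finite S" "{p. prC p x \<noteq> 0} \<subseteq> S"
  shows "sg f x = (\<Sum>p\<in>S. signed p (f (prC p x)))"
  unfolding sg_def by (rule sum.mono_neutral_left) (use assms lin_zero[OF assms(1)] in auto)

lemma lin_sg: assumes "lin f" shows "lin (sg f)"
proof -
  have z: "f 0 = 0" by (rule lin_zero[OF assms])
  have "sg f (x + y) = sg f x + sg f y" for x y
  proof -
    let ?S = "{p. prC p x \<noteq> 0} \<union> {p. prC p y \<noteq> 0}"
    have "sg f (x + y) = (\<Sum>p\<in>?S. signed p (f (prC p (x + y))))"
      by (rule sg_superset[OF assms]) (auto simp: prC_add)
    also have "\<dots> = (\<Sum>p\<in>?S. signed p (f (prC p x))) + (\<Sum>p\<in>?S. signed p (f (prC p y)))"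
      by (simp add: prC_add lin_add[OF assms] signed_add sum.distrib)
    also have "\<dots> = sg f x + sg f y"
      by (simp add: sg_superset[OF assms, of ?S])
    finally show ?thesis .
  qed
  moreover have "sg f (smC r x) = smA r (sg f x)" for r x
  proof -
    have "sg f (smC r x) = (\<Sum>p\<in>{p. prC p x \<noteq> 0}. signed p (f (prC p (smC r x))))"
      by (rule sg_superset[OF assms]) (auto simp: prC_smul)
    then show ?thesis by (simp add: prC_smul lin_smul[OF assms] mA.signed mA.sum sg_def)
  qed
  ultimately show ?thesis by (simp add: lin_def)
qed

lemma sg_homog: assumes "lin f" "homog prC d x" shows "sg f x = signed d (f x)"
proof -
  have "{p. prC p x \<noteq> 0} \<subseteq> {d}"
  proof
    fix p assume "p \<in> {p. prC p x \<noteq> 0}"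
    then have "prC p (prC d x) \<noteq> 0" using assms(2) by (simp add: homog_def)
    then show "p \<in> {d}" by (simp add: prC_prC split: if_splits)
  qed
  then have "sg f x = (\<Sum>p\<in>{d}. signed p (f (prC p x)))" by (intro sg_superset[OF assms(1)]) simp_all
  then show ?thesis using assms(2) by (simp add: homog_def)
qed

lemma sg_one: "sg one = one"
proof
  fix x
  let ?S = "{p. prC p x \<noteq> 0} \<union> {0}"
  have "sg one x = (\<Sum>p\<in>?S. signed p (one (prC p x)))"
    by (rule sg_superset[OF lin_one]) auto
  also have "\<dots> = (\<Sum>p\<in>{0}. signed p (one (prC p x)))"
    by (rule sum.mono_neutral_right) (auto simp: one_apply epsC_pr)
  also have "\<dots> = one x" by (simp add: one_apply epsC_decomp[of x, symmetric])
  finally show "sg one x = one x" .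
qed

lemma cup0_eq: assumes "lin f" shows "cup C A 0 f g = cupz f g"
proof
  fix c
  show "cup C A 0 f g c = cupz f g c"
    unfolding cup_def cupz_def
  proof (rule fs_ext_cong)
    fix l assume lk: "l \<in> Poly_Mapping.keys (Dl c)"
    from D_len[OF lk] obtain a b where l: "l = [a, b]" by (rule len2E)
    let ?S = "{p. prC p a \<noteq> 0}"
    have "f a = f (\<Sum>p\<in>?S. prC p a)" by (rule arg_cong[where f=f, OF prC_decomp])
    also have "\<dots> = (\<Sum>p\<in>?S. f (prC p a))" by (rule lin_sum[OF assms])
    finally have fa: "f a = (\<Sum>p\<in>?S. f (prC p a))" .
    show "(\<Sum>p\<in>{p. prC p (l ! 0) \<noteq> 0}. signed (0 * p) (f (prC p (l ! 0)) * g (l ! 1))) = phi2 f g l"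
      by (simp add: l fa sum_distrib_right)
  qed
qed

lemma cupm1_eq: "cup C A (-1) f g = cupz (sg f) g"
proof
  fix c
  show "cup C A (-1) f g c = cupz (sg f) g c"
    unfolding cup_def cupz_def
  proof (rule fs_ext_cong)
    fix l assume lk: "l \<in> Poly_Mapping.keys (Dl c)"
    from D_len[OF lk] obtain a b where l: "l = [a, b]" by (rule len2E)
    show "(\<Sum>p\<in>{p. prC p (l ! 0) \<noteq> 0}. signed (-1 * p) (f (prC p (l ! 0)) * g (l ! 1))) = phi2 (sg f) g l"
      by (simp add: l sg_def sum_distrib_right signed_uminus_int signed_mult_left)
  qed
qed

definition hd0 :: "('c \<Rightarrow> 'a) \<Rightarrow> 'c \<Rightarrow> 'a" where
  "hd0 f c = dA (f c) - f (dC c)"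

lemma hom_d0_eq: "hom_d C A 0 f = hd0 f"
  by (simp add: fun_eq_iff hom_d_def hd0_def)

lemma lin_hd0: "lin f \<Longrightarrow> lin (hd0 f)"
  by (simp add: lin_def hd0_def dA_add dC_add dA_smul dC_smul mA.diff)

lemma dA_one: "dA 1 = 0"
  using dA_leibniz[OF homogA_one, of 1] by simp

lemma hd0_one: "hd0 one = (\<lambda>c. 0)"
  by (simp add: fun_eq_iff hd0_def one_apply dA_smul dA_one epsC_d)

lemma homogA_sum: "(\<And>i. i \<in> S \<Longrightarrow> homog prA p (f i)) \<Longrightarrow> homog prA p (sum f S)"
proof (induction S rule: infinite_finite_induct)
  case (infinite S) then show ?case by (simp add: homogA_zero)
next
  case empty then show ?case by (simp add: homogA_zero)
next
  case (insert x F) then show ?case by (simp add: homogA_add)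
qed

lemma homogA_minus: "homog prA p x \<Longrightarrow> homog prA p (- x)"
  by (simp add: homog_def additive_minus[of "prA p", OF prA_add])
lemma homogA_diff: "homog prA p x \<Longrightarrow> homog prA p y \<Longrightarrow> homog prA p (x - y)"
  by (simp add: homog_def additive_diff[of "prA p", OF prA_add])

lemma hom_deg0_iff: "hom_deg C A 0 f \<longleftrightarrow> lin f \<and> (\<forall>p x. homog prC p x \<longrightarrow> homog prA p (f x))"
  by (simp add: hom_deg_def deg_map_def lin_def)

lemma leibniz:
  assumes h: "lin h" and hh: "\<And>p x. homog prC p x \<Longrightarrow> homog prA p (h x)" and k: "lin k"
  shows "hd0 (cupz h k) c = cupz (hd0 h) k c + cupz (sg h) (hd0 k) c"
proof -
  have e1: "dA (cupz h k c) = fs_ext smA (\<lambda>l. dA (phi2 h k l)) (Dl c)"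
    unfolding cupz_def by (rule fs_ext_lin) (simp_all add: dA_add dA_smul)
  have e2: "cupz h k (dC c) = fs_ext smA (\<lambda>l. fs_ext smA (phi2 h k) (d_tensor2 C l)) (Dl c)"
    unfolding cupz_def using phi2_teq[OF h k D_d[of c]] by (simp add: mA.fs_ext_comp)
  have e3: "dA (phi2 h k l) - fs_ext smA (phi2 h k) (d_tensor2 C l) = phi2 (hd0 h) k l + phi2 (sg h) (hd0 k) l"
    if lk: "l \<in> Poly_Mapping.keys (Dl c)" for l
  proof -
    from D_len[OF lk] obtain a b where l: "l = [a, b]" by (rule len2E)
    let ?S = "{p. prC p a \<noteq> 0}"
    have "h a = h (\<Sum>p\<in>?S. prC p a)" by (rule arg_cong[where f=h, OF prC_decomp])
    also have "\<dots> = (\<Sum>p\<in>?S. h (prC p a))" by (rule lin_sum[OF h])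
    finally have ha: "h a = (\<Sum>p\<in>?S. h (prC p a))" .
    have sga: "sg h a = (\<Sum>p\<in>?S. signed p (h (prC p a)))" by (simp add: sg_def)
    have dT: "fs_ext smA (phi2 h k) (d_tensor2 C [a, b]) = h (dC a) * k b + sg h a * k (dC b)"
      by (simp add: d_tensor2_def mA.fs_ext_add mA.fs_ext_sum mA.fs_ext_signed sga sum_distrib_right signed_mult_left)
    have dP: "dA (h a * k b) = dA (h a) * k b + sg h a * dA (k b)"
    proof -
      have "h a * k b = (\<Sum>p\<in>?S. h (prC p a) * k b)" by (subst ha) (simp add: sum_distrib_right)
      then have "dA (h a * k b) = (\<Sum>p\<in>?S. dA (h (prC p a) * k b))"
        by (simp add: additive_sum[OF dA_add])
      also have "\<dots> = (\<Sum>p\<in>?S. dA (h (prC p a)) * k b + signed p (h (prC p a) * dA (k b)))"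
        by (rule sum.cong[OF refl], rule dA_leibniz, rule hh, rule homogC_pr)
      also have "\<dots> = (\<Sum>p\<in>?S. dA (h (prC p a))) * k b + (\<Sum>p\<in>?S. signed p (h (prC p a))) * dA (k b)"
        by (simp add: sum.distrib sum_distrib_right signed_mult_left)
      also have "(\<Sum>p\<in>?S. dA (h (prC p a))) = dA (h a)"
        by (simp only: ha additive_sum[OF dA_add])
      finally show ?thesis by (simp add: sga)
    qed
    show ?thesis unfolding l by (simp add: dT dP hd0_def algebra_simps)
  qed
  have "hd0 (cupz h k) c = fs_ext smA (\<lambda>l. dA (phi2 h k l) - fs_ext smA (phi2 h k) (d_tensor2 C l)) (Dl c)"
    unfolding hd0_def[of "cupz h k"] e1 e2 by (simp add: mA.fs_ext_fdiff)
  also have "\<dots> = fs_ext smA (\<lambda>l. phi2 (hd0 h) k l + phi2 (sg h) (hd0 k) l) (Dl c)"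
    by (rule fs_ext_cong) (rule e3)
  also have "\<dots> = cupz (hd0 h) k c + cupz (sg h) (hd0 k) c"
    by (simp add: mA.fs_ext_fadd cupz_def)
  finally show ?thesis .
qed

lemma graded_key2:
  assumes "graded_tensor prC n q" "l \<in> Poly_Mapping.keys q" "l = [a, b]"
  obtains d1 d2 where "homog prC d1 a" "homog prC d2 b" "d1 + d2 = n"
proof -
  obtain ds where ds: "length ds = length l" "\<forall>i<length l. homog prC (ds ! i) (l ! i)" "sum_list ds = n"
    using assms(1,2) unfolding graded_tensor_def by blast
  have "length ds = 2" using ds(1) assms(3) by simp
  then obtain d1 d2 where "ds = [d1, d2]" by (rule len2E)
  then show ?thesis using ds assms(3) that by (auto simp: less_Suc_eq numeral_2_eq_2)
qed
lemma hom_deg0_cupz: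
  assumes f: "hom_deg C A 0 f" and g: "hom_deg C A 0 g"
  shows "hom_deg C A 0 (cupz f g)"
proof -
  have lf: "lin f" and lg: "lin g" using f g by (simp_all add: hom_deg0_iff)
  have hf: "\<And>p x. homog prC p x \<Longrightarrow> homog prA p (f x)" and hg: "\<And>p x. homog prC p x \<Longrightarrow> homog prA p (g x)"
    using f g by (simp_all add: hom_deg0_iff)
  have "homog prA p (cupz f g x)" if hx: "homog prC p x" for p x
  proof -
    obtain q where q: "teq smC (Dl x) q" "graded_tensor prC p q" using D_graded[OF hx] by blast
    have "cupz f g x = fs_ext smA (phi2 f g) q" unfolding cupz_def by (rule phi2_teq[OF lf lg q(1)])
    also have "\<dots> \<in> {y. homog prA p y}"
    proof (rule mA.fs_ext_closed)
      fix l assume l: "l \<in> Poly_Mapping.keys q"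
      show "phi2 f g l \<in> {y. homog prA p y}"
      proof (cases "length l = 2")
        case True
        then obtain a b where ab: "l = [a, b]" by (rule len2E)
        obtain d1 d2 where "homog prC d1 a" "homog prC d2 b" "d1 + d2 = p"
          by (rule graded_key2[OF q(2) l ab])
        then show ?thesis using homogA_mult[OF hf hg] by (auto simp: ab)
      next
        case False then show ?thesis by (simp add: phi2_def homogA_zero)
      qed
    qed (auto simp: homogA_zero homogA_add homogA_smul)
    finally show ?thesis by simp
  qed
  then show ?thesis using lin_cupz[OF lf lg] by (simp add: hom_deg0_iff)
qed

lemma sg_cupz:
  assumes f: "lin f" and g: "lin g"
  shows "sg (cupz f g) c = cupz (sg f) (sg g) c"
proof -
  have trm: "signed p (cupz f g (prC p c)) = cupz (sg f) (sg g) (prC p c)" for p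
  proof -
    obtain q where q: "teq smC (Dl (prC p c)) q" "graded_tensor prC p q" using D_graded[OF homogC_pr] by blast
    have "signed p (cupz f g (prC p c)) = signed p (fs_ext smA (phi2 f g) q)"
      unfolding cupz_def by (simp add: phi2_teq[OF f g q(1)])
    also have "\<dots> = fs_ext smA (\<lambda>l. signed p (phi2 f g l)) q"
      by (rule fs_ext_lin) (simp_all add: signed_add mA.signed)
    also have "\<dots> = fs_ext smA (phi2 (sg f) (sg g)) q"
    proof (rule fs_ext_cong)
      fix l assume l: "l \<in> Poly_Mapping.keys q"
      show "signed p (phi2 f g l) = phi2 (sg f) (sg g) l"
      proof (cases "length l = 2")
        case True
        then obtain a b where ab: "l = [a, b]" by (rule len2E)
        obtain d1 d2 where d: "homog prC d1 a" "homog prC d2 b" "d1 + d2 = p"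
          by (rule graded_key2[OF q(2) l ab])
        show ?thesis
          using signed_prod[of d1 d2 "f a" "g b"]
          by (simp add: ab d(3)[symmetric] sg_homog[OF f d(1)] sg_homog[OF g d(2)])
      next
        case False then show ?thesis by (simp add: phi2_def)
      qed
    qed
    also have "\<dots> = cupz (sg f) (sg g) (prC p c)"
      unfolding cupz_def by (simp add: phi2_teq[OF lin_sg[OF f] lin_sg[OF g] q(1)])
    finally show ?thesis .
  qed
  have "sg (cupz f g) c = (\<Sum>p\<in>{p. prC p c \<noteq> 0}. cupz (sg f) (sg g) (prC p c))"
    by (simp add: sg_def trm)
  also have "\<dots> = cupz (sg f) (sg g) (\<Sum>p\<in>{p. prC p c \<noteq> 0}. prC p c)"
    by (rule lin_sum[OF lin_cupz[OF lin_sg[OF f] lin_sg[OF g]], symmetric])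
  also have "\<dots> = cupz (sg f) (sg g) c" by (simp only: prC_decomp[of c, symmetric])
  finally show ?thesis .
qed

end


lemma series_eq:
  assumes "\<forall>m\<ge>N. F m c = 0" "N \<le> M"
  shows "series F c = (\<Sum>n<M. F n c)"
proof -
  let ?L = "LEAST N. \<forall>m\<ge>N. F m c = 0"
  have L: "\<forall>m\<ge>?L. F m c = 0" by (rule LeastI[of "\<lambda>N. \<forall>m\<ge>N. F m c = 0"]) (rule assms(1))
  have "?L \<le> N" by (rule Least_le) (rule assms(1))
  then have "?L \<le> M" using assms(2) by simp
  then have "(\<Sum>n<M. F n c) = (\<Sum>n<?L. F n c)"
  proof (intro sum.mono_neutral_right)
    show "finite {..<M}" by simp
    show "{..<?L} \<subseteq> {..<M}" using \<open>?L \<le> M\<close> by auto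
    show "\<forall>i\<in>{..<M} - {..<?L}. F i c = 0"
    proof
      fix i assume "i \<in> {..<M} - {..<?L}"
      then have "?L \<le> i" by simp
      then show "F i c = 0" using L by blast
    qed
  qed
  then show ?thesis by (simp add: series_def)
qed

context setting begin

primrec cpow :: "('c \<Rightarrow> 'a) \<Rightarrow> nat \<Rightarrow> 'c \<Rightarrow> 'a" where
  "cpow g 0 = one" | "cpow g (Suc n) = cupz g (cpow g n)"

lemma lin_cpow: "lin g \<Longrightarrow> lin (cpow g n)"
  by (induction n) (simp_all add: lin_one lin_cupz)

lemma cup_pow_eq: "lin g \<Longrightarrow> cup_pow C A g n = cpow g n"
  by (induction n) (simp_all add: one_def cup0_eq)

lemma cpow_add: assumes g: "lin g" shows "cpow g (a + b) = cupz (cpow g a) (cpow g b)"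
proof (induction a)
  case 0 then show ?case by (simp add: fun_eq_iff cupz_one_left lin_cpow[OF g])
next
  case (Suc a)
  have "cpow g (Suc a + b) = cupz g (cpow g (a + b))" by simp
  also have "\<dots> = cupz g (cupz (cpow g a) (cpow g b))" by (simp only: Suc.IH)
  also have "\<dots> = cupz (cupz g (cpow g a)) (cpow g b)"
    by (simp add: fun_eq_iff cupz_assoc g lin_cpow[OF g])
  finally show ?case by simp
qed

lemma cpow_Suc': assumes g: "lin g" shows "cpow g (Suc n) = cupz (cpow g n) g"
proof -
  have "cpow g (n + 1) = cupz (cpow g n) (cpow g 1)" by (rule cpow_add[OF g])
  moreover have "cpow g 1 = g" by (simp add: fun_eq_iff cupz_one_right g)
  ultimately show ?thesis by simp
qed

primrec Pg :: "('c \<Rightarrow> 'a) \<Rightarrow> 'c list \<Rightarrow> 'a" where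
  "Pg g [] = 1" | "Pg g (x # xs) = g x * Pg g xs"

definition Qf :: "('c \<Rightarrow> 'a) \<Rightarrow> ('c \<Rightarrow> 'a) \<Rightarrow> 'c list \<Rightarrow> 'a" where
  "Qf f g l = f (hd l) * Pg g (tl l)"


lemma Pg_multilin:
  assumes g: "lin g"
  shows "Pg g (xs @ (x + y) # ys) = Pg g (xs @ x # ys) + Pg g (xs @ y # ys)"
    and "Pg g (xs @ smC r x # ys) = smA r (Pg g (xs @ x # ys))"
proof -
  show "Pg g (xs @ (x + y) # ys) = Pg g (xs @ x # ys) + Pg g (xs @ y # ys)"
    by (induction xs) (simp_all add: lin_add[OF g] distrib_left distrib_right)
  show "Pg g (xs @ smC r x # ys) = smA r (Pg g (xs @ x # ys))"
  proof (induction xs)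
    case Nil then show ?case by (simp add: lin_smul[OF g] smA_mult_left)
  next
    case (Cons a xs) then show ?case by (simp add: smA_mult_right)
  qed
qed

lemma Qf_multilin:
  assumes f: "lin f" and g: "lin g"
  shows "Qf f g (xs @ (x + y) # ys) = Qf f g (xs @ x # ys) + Qf f g (xs @ y # ys)"
    and "Qf f g (xs @ smC r x # ys) = smA r (Qf f g (xs @ x # ys))"
proof -
  show "Qf f g (xs @ (x + y) # ys) = Qf f g (xs @ x # ys) + Qf f g (xs @ y # ys)"
  proof (cases xs)
    case Nil then show ?thesis by (simp add: Qf_def lin_add[OF f] distrib_right)
  next
    case (Cons a xs') then show ?thesis by (simp add: Qf_def Pg_multilin(1)[OF g] distrib_left)
  qed
  show "Qf f g (xs @ smC r x # ys) = smA r (Qf f g (xs @ x # ys))"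
  proof (cases xs)
    case Nil then show ?thesis by (simp add: Qf_def lin_smul[OF f] smA_mult_left)
  next
    case (Cons a xs') then show ?thesis by (simp add: Qf_def Pg_multilin(2)[OF g] smA_mult_right)
  qed
qed

lemma Qf_Delta_left:
  assumes f: "lin f" and g: "lin g"
  shows "fs_ext smA (Qf f g) (Delta_left C l) = Qf (cupz f g) g l"
proof -
  have "fs_ext smA (Qf f g) (Delta_left C l) = fs_ext smA (\<lambda>m. Qf f g (m @ tl l)) (Dl (hd l))"
    by (simp add: Delta_left_def mA.fs_ext_comp)
  also have "\<dots> = fs_ext smA (\<lambda>m. phi2 f g m * Pg g (tl l)) (Dl (hd l))"
  proof (rule fs_ext_cong)
    fix m assume mk: "m \<in> Poly_Mapping.keys (Dl (hd l))"
    from D_len[OF mk] obtain a b where m: "m = [a, b]" by (rule len2E)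
    show "Qf f g (m @ tl l) = phi2 f g m * Pg g (tl l)" by (simp add: m Qf_def mult.assoc)
  qed
  also have "\<dots> = cupz f g (hd l) * Pg g (tl l)"
    unfolding cupz_def by (rule fs_ext_lin[symmetric]) (simp_all add: distrib_right smA_mult_left)
  finally show ?thesis by (simp add: Qf_def)
qed

lemma Qf_iter:
  assumes g: "lin g"
  shows "lin f \<Longrightarrow> fs_ext smA (Qf f g) (Delta_iter C n c) = cupz f (cpow g n) c"
proof (induction n arbitrary: f)
  case 0 then show ?case by (simp add: Qf_def cupz_one_right)
next
  case (Suc n)
  have "fs_ext smA (Qf f g) (Delta_iter C (Suc n) c) = fs_ext smA (\<lambda>l. fs_ext smA (Qf f g) (Delta_left C l)) (Delta_iter C n c)"
    by (simp add: mA.fs_ext_comp)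
  also have "\<dots> = fs_ext smA (Qf (cupz f g) g) (Delta_iter C n c)"
    by (simp add: Qf_Delta_left[OF Suc.prems g])
  also have "\<dots> = cupz (cupz f g) (cpow g n) c"
    by (rule Suc.IH) (rule lin_cupz[OF Suc.prems g])
  also have "\<dots> = cupz f (cpow g (Suc n)) c"
    by (simp add: cupz_assoc Suc.prems g lin_cpow)
  finally show ?case .
qed

definition piC :: "'c \<Rightarrow> 'c" where "piC x = x - smC (epsC x) uC"

lemma Qf_pi:
  assumes f: "lin f" and g: "lin g" and fu: "f uC = 0" and gu: "g uC = 0"
  shows "Qf f g (map piC l) = Qf f g l"
proof -
  have P: "Pg g (map piC xs) = Pg g xs" for xs
    by (induction xs) (simp_all add: piC_def lin_diff[OF g] lin_smul[OF g] gu)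
  show ?thesis
  proof (cases l)
    case Nil then show ?thesis by simp
  next
    case (Cons a xs) then show ?thesis
      by (simp add: Qf_def P piC_def lin_diff[OF f] lin_smul[OF f] fu)
  qed
qed

lemma nil_main:
  assumes f: "lin f" and g: "lin g" and fu: "f uC = 0" and gu: "g uC = 0"
    and tn: "fs_ext fs_smul (\<lambda>l. gen (map piC l)) (Delta_iter C n c) \<in> tnull smC"
  shows "cupz f (cpow g n) c = 0"
proof -
  have "cupz f (cpow g n) c = fs_ext smA (Qf f g) (Delta_iter C n c)"
    by (rule Qf_iter[OF g f, symmetric])
  also have "\<dots> = fs_ext smA (\<lambda>l. Qf f g (map piC l)) (Delta_iter C n c)"
    by (simp add: Qf_pi[OF f g fu gu])
  also have "\<dots> = fs_ext smA (Qf f g) (fs_ext fs_smul (\<lambda>l. gen (map piC l)) (Delta_iter C n c))"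
    by (simp add: mA.fs_ext_comp)
  also have "\<dots> = 0"
    by (rule mA.fs_ext_tnull[OF _ _ tn]) (simp_all add: Qf_multilin[OF f g])
  finally show ?thesis .
qed

lemma cpow_unit: assumes g: "lin g" and gu: "g uC = 0" shows "cpow g (Suc k) uC = 0"
  by (simp add: cupz_unit g lin_cpow gu)

lemma nilpotent:
  assumes g: "lin g" and gu: "g uC = 0" and cc: "cocomplete C"
  shows "\<exists>N. \<forall>m\<ge>N. cpow g m c = 0"
proof -
  obtain n where tn: "fs_ext fs_smul (\<lambda>l. gen (map piC l)) (Delta_iter C n c) \<in> tnull smC"
    using cc unfolding cocomplete_def piC_def by blast
  have "cpow g m c = 0" if "m \<ge> Suc n" for m
  proof -
    define k where "k = m - Suc n"
    have m: "m = Suc k + n" using \<open>m \<ge> Suc n\<close> unfolding k_def by arith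
    have "cpow g m c = cupz (cpow g (Suc k)) (cpow g n) c" by (simp only: m cpow_add[OF g])
    also have "\<dots> = 0"
      by (rule nil_main[OF lin_cpow[OF g] g cpow_unit[OF g gu] gu tn])
    finally show ?thesis .
  qed
  then show ?thesis by blast
qed

end


context setting begin

lemma tc_iff: assumes "lin t"
  shows "tc_homotopy C A t u h \<longleftrightarrow> hom_deg C A 0 h \<and> hd0 h = (\<lambda>c. cupz t h c - cupz (sg h) u c)
     \<and> (\<forall>c. epsA (h c) = epsC c) \<and> (\<forall>r. h (smC r uC) = smA r 1)"
  by (simp add: tc_homotopy_def hom_d0_eq cup0_eq[OF assms] cupm1_eq)

lemma eps_cupz: assumes F: "lin F" and G: "\<And>b. epsA (G b) = epsC b"
  shows "epsA (cupz F G c) = epsA (F c)"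
proof -
  have "epsA (cupz F G c) = fs_ext (*) (\<lambda>l. epsA (phi2 F G l)) (Dl c)"
    unfolding cupz_def by (rule fs_ext_lin) (simp_all add: epsA_add epsA_smul)
  also have "\<dots> = fs_ext (*) (\<lambda>l. epsA (F (smC (epsC (l ! 1)) (l ! 0)))) (Dl c)"
  proof (rule fs_ext_cong)
    fix l assume lk: "l \<in> Poly_Mapping.keys (Dl c)"
    from D_len[OF lk] obtain a b where l: "l = [a, b]" by (rule len2E)
    show "epsA (phi2 F G l) = epsA (F (smC (epsC (l ! 1)) (l ! 0)))"
      by (simp add: l epsA_mult G lin_smul[OF F] epsA_smul mult.commute)
  qed
  also have "\<dots> = epsA (F (fs_ext smC (\<lambda>l. smC (epsC (l ! 1)) (l ! 0)) (Dl c)))"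
    by (rule fs_ext_lin[where F="\<lambda>z. epsA (F z)" and sm=smC and sm'="(*)", symmetric])
      (simp_all add: lin_add[OF F] lin_smul[OF F] epsA_add epsA_smul)
  also have "\<dots> = epsA (F c)" by (simp only: counitR)
  finally show ?thesis .
qed

lemma idealD:
  assumes "dg_ideal A I"
  shows ideal_0: "0 \<in> I" and ideal_add: "x \<in> I \<Longrightarrow> y \<in> I \<Longrightarrow> x + y \<in> I"
    and ideal_minus: "x \<in> I \<Longrightarrow> - x \<in> I" and ideal_smul: "x \<in> I \<Longrightarrow> smA r x \<in> I"
    and ideal_multl: "x \<in> I \<Longrightarrow> a * x \<in> I" and ideal_multr: "x \<in> I \<Longrightarrow> x * a \<in> I"
  using assms unfolding dg_ideal_def by blast+

lemma ideal_diff: "dg_ideal A I \<Longrightarrow> x \<in> I \<Longrightarrow> y \<in> I \<Longrightarrow> x - y \<in> I"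
  using ideal_add[of I x "- y"] ideal_minus[of I y] by simp

lemma ideal_sum: assumes I: "dg_ideal A I" shows "(\<And>i. i \<in> S \<Longrightarrow> f i \<in> I) \<Longrightarrow> sum f S \<in> I"
proof (induction S rule: infinite_finite_induct)
  case (infinite S) then show ?case by (simp add: ideal_0[OF I])
next
  case empty then show ?case by (simp add: ideal_0[OF I])
next
  case (insert x F) then show ?case by (simp add: ideal_add[OF I])
qed

lemma ideal_cupz1: assumes I: "dg_ideal A I" and f: "\<And>x. f x \<in> I" shows "cupz f g c \<in> I"
  unfolding cupz_def
proof (rule mA.fs_ext_closed)
  fix l show "phi2 f g l \<in> I" by (simp add: phi2_def ideal_0[OF I] ideal_multr[OF I f])
qed (auto simp: ideal_0[OF I] ideal_add[OF I] ideal_smul[OF I])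

lemma hom_deg0_one: "hom_deg C A 0 one"
proof -
  have "homog prA p (one x)" if hx: "homog prC p x" for p x
  proof (cases "p = 0")
    case True then show ?thesis by (simp add: one_apply homogA_smul homogA_one)
  next
    case False
    have "epsC x = 0" using epsC_pr[OF False, of x] hx by (simp add: homog_def)
    then show ?thesis by (simp add: one_apply homogA_zero)
  qed
  then show ?thesis by (simp add: hom_deg0_iff lin_one)
qed

lemma unit_val: assumes "\<forall>r. h (smC r uC) = smA r 1" shows "h uC = 1"
  using assms[rule_format, of 1] by simp

lemma part_i:
  assumes I: "dg_ideal A I" and t: "lin t" and u: "lin u" and v: "lin v"
    and h: "tc_homotopy C A t u h" and ht: "trivial_mod C A I h"
    and k: "tc_homotopy C A u v k" and kt: "trivial_mod C A I k"
  shows "tc_homotopy C A t v (cup C A 0 h k) \<and> trivial_mod C A I (cup C A 0 h k)"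
proof -
  have H: "hom_deg C A 0 h \<and> hd0 h = (\<lambda>c. cupz t h c - cupz (sg h) u c)
     \<and> (\<forall>c. epsA (h c) = epsC c) \<and> (\<forall>r. h (smC r uC) = smA r 1)"
    using h tc_iff[OF t] by blast
  then have hd: "hom_deg C A 0 h" and dh: "hd0 h = (\<lambda>c. cupz t h c - cupz (sg h) u c)"
    and uh: "\<forall>r. h (smC r uC) = smA r 1" by blast+
  have K: "hom_deg C A 0 k \<and> hd0 k = (\<lambda>c. cupz u k c - cupz (sg k) v c)
     \<and> (\<forall>c. epsA (k c) = epsC c) \<and> (\<forall>r. k (smC r uC) = smA r 1)"
    using k tc_iff[OF u] by blast
  then have kd: "hom_deg C A 0 k" and dk: "hd0 k = (\<lambda>c. cupz u k c - cupz (sg k) v c)"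
    and ek: "\<And>c. epsA (k c) = epsC c" and uk: "\<forall>r. k (smC r uC) = smA r 1" by blast+
  have lh: "lin h" and lk: "lin k" using hd kd by (simp_all add: hom_deg0_iff)
  have hh: "\<And>p x. homog prC p x \<Longrightarrow> homog prA p (h x)" using hd by (simp add: hom_deg0_iff)
  have ceq: "cup C A 0 h k = cupz h k" by (rule cup0_eq[OF lh])
  have lhk: "lin (cupz h k)" by (rule lin_cupz[OF lh lk])
  have sgf: "sg (cupz h k) = cupz (sg h) (sg k)" by (rule ext) (rule sg_cupz[OF lh lk])
  have dhk: "hd0 (cupz h k) = (\<lambda>c. cupz t (cupz h k) c - cupz (sg (cupz h k)) v c)"
  proof
    fix c
    have a1: "cupz (cupz t h) k c = cupz t (cupz h k) c" by (rule cupz_assoc[OF t lh lk])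
    have a2: "cupz (cupz (sg h) u) k c = cupz (sg h) (cupz u k) c" by (rule cupz_assoc[OF lin_sg[OF lh] u lk])
    have a3: "cupz (sg h) (cupz (sg k) v) c = cupz (cupz (sg h) (sg k)) v c"
      by (rule cupz_assoc[OF lin_sg[OF lh] lin_sg[OF lk] v, symmetric])
    have "hd0 (cupz h k) c = cupz (hd0 h) k c + cupz (sg h) (hd0 k) c" by (rule leibniz[OF lh hh lk])
    also have "\<dots> = cupz (\<lambda>c. cupz t h c - cupz (sg h) u c) k c + cupz (sg h) (\<lambda>c. cupz u k c - cupz (sg k) v c) c"
      by (simp only: dh dk)
    also have "\<dots> = (cupz (cupz t h) k c - cupz (cupz (sg h) u) k c) + (cupz (sg h) (cupz u k) c - cupz (sg h) (cupz (sg k) v) c)"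
      by (simp only: cupz_fdiff1 cupz_fdiff2)
    also have "\<dots> = cupz t (cupz h k) c - cupz (cupz (sg h) (sg k)) v c"
      by (simp only: a1 a2 a3) simp
    also have "\<dots> = cupz t (cupz h k) c - cupz (sg (cupz h k)) v c" by (simp only: sgf)
    finally show "hd0 (cupz h k) c = cupz t (cupz h k) c - cupz (sg (cupz h k)) v c" .
  qed
  have ehk: "\<forall>c. epsA (cupz h k c) = epsC c"
    using eps_cupz[OF lh ek] H by simp
  have uhk: "\<forall>r. cupz h k (smC r uC) = smA r 1"
    by (simp add: lin_smul[OF lhk] cupz_unit[OF lh lk] unit_val[OF uh] unit_val[OF uk])
  have tc: "tc_homotopy C A t v (cupz h k)"
    unfolding tc_iff[OF t] using hom_deg0_cupz[OF hd kd] dhk ehk uhk by blast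
  have tr: "trivial_mod C A I (cupz h k)"
    unfolding trivial_mod_def
  proof
    fix c
    have "cupz h k c - hom_one C A c = cupz (\<lambda>x. h x - one x) k c + (k c - one c)"
      by (simp add: cupz_fdiff1 cupz_one_left[OF lk] one_def[symmetric])
    also have "\<dots> \<in> I"
      using ht kt I by (auto intro!: ideal_add ideal_cupz1 simp: trivial_mod_def one_def)
    finally show "cupz h k c - hom_one C A c \<in> I" .
  qed
  show ?thesis using tc tr ceq by simp
qed

end


context setting begin

lemma part_ii:
  assumes I: "dg_ideal A I" and cc: "cocomplete C" and t: "lin t" and u: "lin u"
    and h: "tc_homotopy C A t u h" and ht: "trivial_mod C A I h"
    and gdef: "g = (\<lambda>c. hom_one C A c - h c)"
  shows "(\<forall>c. \<exists>N. \<forall>m\<ge>N. cup_pow C A g m c = 0) \<and> hom_deg C A 0 (series (cup_pow C A g)) \<and>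
    cup C A 0 h (series (cup_pow C A g)) = hom_one C A \<and> cup C A 0 (series (cup_pow C A g)) h = hom_one C A \<and>
    tc_homotopy C A u t (series (cup_pow C A g)) \<and> trivial_mod C A I (series (cup_pow C A g))"
proof -
  have HH: "hom_deg C A 0 h \<and> hd0 h = (\<lambda>c. cupz t h c - cupz (sg h) u c)
     \<and> (\<forall>c. epsA (h c) = epsC c) \<and> (\<forall>r. h (smC r uC) = smA r 1)"
    using h tc_iff[OF t] by blast
  then have hd: "hom_deg C A 0 h" and dh: "hd0 h = (\<lambda>c. cupz t h c - cupz (sg h) u c)"
    and eh: "\<And>c. epsA (h c) = epsC c" and uh: "\<forall>r. h (smC r uC) = smA r 1" by blast+
  have lh: "lin h" using hd by (simp add: hom_deg0_iff)
  have hh: "\<And>p x. homog prC p x \<Longrightarrow> homog prA p (h x)" using hd by (simp add: hom_deg0_iff)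
  have g1: "g = (\<lambda>c. one c - h c)" by (simp add: gdef one_def)
  have lg: "lin g" unfolding g1 by (rule lin_fdiff[OF lin_one lh])
  have huC: "h uC = 1" by (rule unit_val[OF uh])
  have gu: "g uC = 0" by (simp add: g1 one_apply unit_eps huC)
  have hdg: "hom_deg C A 0 g"
  proof -
    have "homog prA p (g x)" if hx: "homog prC p x" for p x
      using hom_deg0_one hh[OF hx] hx by (simp add: g1 hom_deg0_iff homogA_diff)
    then show ?thesis using lg by (simp add: hom_deg0_iff)
  qed
  have cpe: "cup_pow C A g = cpow g" by (rule ext) (rule cup_pow_eq[OF lg])
  define H where "H = series (cpow g)"
  have nil: "\<forall>c. \<exists>N. \<forall>m\<ge>N. cpow g m c = 0" using nilpotent[OF lg gu cc] by blast
  define NN where "NN x = (SOME N. \<forall>m\<ge>N. cpow g m x = 0)" for x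
  have NN: "\<forall>m\<ge>NN x. cpow g m x = 0" for x
    unfolding NN_def by (rule someI_ex) (rule nil[rule_format])
  have HM: "H x = (\<Sum>n<M. cpow g n x)" if "NN x \<le> M" for x M
    unfolding H_def by (rule series_eq[where F="cpow g", OF NN[of x] that])
  have hd_cpow: "hom_deg C A 0 (cpow g n)" for n
    by (induction n) (simp_all add: hom_deg0_one hom_deg0_cupz hdg)
  have lcp: "lin (cpow g n)" for n by (rule lin_cpow[OF lg])
  have lH: "lin H"
    unfolding lin_def
  proof (intro conjI allI)
    fix x y
    let ?M = "max (NN (x + y)) (max (NN x) (NN y))"
    show "H (x + y) = H x + H y"
      by (simp add: HM[of _ ?M] lin_add[OF lcp] sum.distrib)
  next
    fix r x
    let ?M = "max (NN (smC r x)) (NN x)"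
    show "H (smC r x) = smA r (H x)"
      by (simp add: HM[of _ ?M] lin_smul[OF lcp] mA.sum)
  qed
  have homH: "homog prA p (H x)" if hx: "homog prC p x" for p x
  proof -
    have "H x = (\<Sum>n<NN x. cpow g n x)" by (rule HM) simp
    also have "homog prA p \<dots>"
      by (rule homogA_sum) (use hd_cpow hx in \<open>simp add: hom_deg0_iff\<close>)
    finally show ?thesis .
  qed
  have hdH: "hom_deg C A 0 H" using lH homH by (simp add: hom_deg0_iff)
  have Hloc: "\<exists>M. NN c \<le> M \<and> (\<forall>l\<in>Poly_Mapping.keys (Dl c). NN (l ! 0) \<le> M \<and> NN (l ! 1) \<le> M)" for c
  proof -
    let ?K = "Poly_Mapping.keys (Dl c)"
    let ?S = "insert (NN c) ((\<lambda>l. NN (l ! 0)) ` ?K \<union> (\<lambda>l. NN (l ! 1)) ` ?K)"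
    have "finite ?S" by simp
    then show ?thesis by (intro exI[of _ "Max ?S"]) (auto intro: Max_ge)
  qed
  have hx: "cupz h F c' = cupz one F c' - cupz g F c'" for F c'
  proof -
    have "cupz h F c' = cupz (\<lambda>x. one x - g x) F c'" by (rule cupz_local) (simp add: g1)
    then show ?thesis by (simp add: cupz_fdiff1)
  qed
  have hx': "cupz F h c' = cupz F one c' - cupz F g c'" for F c'
  proof -
    have "cupz F h c' = cupz F (\<lambda>x. one x - g x) c'" by (rule cupz_local) (simp add: g1)
    then show ?thesis by (simp add: cupz_fdiff2)
  qed
  have hH: "cupz h H c = one c" for c
  proof -
    obtain M where M: "NN c \<le> M" "\<forall>l\<in>Poly_Mapping.keys (Dl c). NN (l ! 0) \<le> M \<and> NN (l ! 1) \<le> M"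
      using Hloc by blast
    have "cupz h H c = cupz h (\<lambda>x. \<Sum>n<M. cpow g n x) c"
    proof (rule cupz_local)
      fix l assume "l \<in> Poly_Mapping.keys (Dl c)"
      then have "NN (l ! 1) \<le> M" using M(2) by blast
      then show "h (l ! 0) = h (l ! 0) \<and> H (l ! 1) = (\<Sum>n<M. cpow g n (l ! 1))" using HM by blast
    qed
    also have "\<dots> = (\<Sum>n<M. cupz h (cpow g n) c)" by (rule cupz_fsum2)
    also have "\<dots> = (\<Sum>n<M. cpow g n c - cpow g (Suc n) c)"
      by (rule sum.cong[OF refl]) (simp add: hx cupz_one_left[OF lcp])
    also have "\<dots> = cpow g 0 c - cpow g M c" by (rule sum_lessThan_telescope')
    also have "\<dots> = one c" using NN[of c] M(1) by simp
    finally show ?thesis .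
  qed
  have Hh: "cupz H h c = one c" for c
  proof -
    obtain M where M: "NN c \<le> M" "\<forall>l\<in>Poly_Mapping.keys (Dl c). NN (l ! 0) \<le> M \<and> NN (l ! 1) \<le> M"
      using Hloc by blast
    have "cupz H h c = cupz (\<lambda>x. \<Sum>n<M. cpow g n x) h c"
    proof (rule cupz_local)
      fix l assume "l \<in> Poly_Mapping.keys (Dl c)"
      then have "NN (l ! 0) \<le> M" using M(2) by blast
      then show "H (l ! 0) = (\<Sum>n<M. cpow g n (l ! 0)) \<and> h (l ! 1) = h (l ! 1)" using HM by blast
    qed
    also have "\<dots> = (\<Sum>n<M. cupz (cpow g n) h c)" by (rule cupz_fsum1)
    also have "\<dots> = (\<Sum>n<M. cpow g n c - cpow g (Suc n) c)"
      by (rule sum.cong[OF refl]) (simp add: hx' cupz_one_right[OF lcp] cpow_Suc'[OF lg, symmetric])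
    also have "\<dots> = cpow g 0 c - cpow g M c" by (rule sum_lessThan_telescope')
    also have "\<dots> = one c" using NN[of c] M(1) by simp
    finally show ?thesis .
  qed
  have hHF: "cupz h H = one" by (rule ext) (rule hH)
  have HhF: "cupz H h = one" by (rule ext) (rule Hh)
  have lsH: "lin (sg H)" by (rule lin_sg[OF lH])
  have lsh: "lin (sg h)" by (rule lin_sg[OF lh])
  have ldH: "lin (hd0 H)" by (rule lin_hd0[OF lH])
  have ldh: "lin (hd0 h)" by (rule lin_hd0[OF lh])
  have a: "cupz (hd0 H) h c = - cupz (sg H) (hd0 h) c" for c
  proof -
    have "hd0 (cupz H h) c = cupz (hd0 H) h c + cupz (sg H) (hd0 h) c" by (rule leibniz[OF lH homH lh])
    then have "cupz (hd0 H) h c + cupz (sg H) (hd0 h) c = 0" by (simp add: HhF hd0_one)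
    then show ?thesis by (simp add: eq_neg_iff_add_eq_0)
  qed
  have aF: "cupz (hd0 H) h = (\<lambda>c. - cupz (sg H) (hd0 h) c)" by (rule ext) (rule a)
  have b: "hd0 H c = - cupz (sg H) (cupz (hd0 h) H) c" for c
  proof -
    have "hd0 H c = cupz (hd0 H) one c" by (simp add: cupz_one_right[OF ldH])
    also have "\<dots> = cupz (hd0 H) (cupz h H) c" by (simp only: hHF)
    also have "\<dots> = cupz (cupz (hd0 H) h) H c" by (rule cupz_assoc[OF ldH lh lH, symmetric])
    also have "\<dots> = - cupz (cupz (sg H) (hd0 h)) H c" by (simp only: aF cupz_fminus1)
    also have "\<dots> = - cupz (sg H) (cupz (hd0 h) H) c" by (simp only: cupz_assoc[OF lsH ldh lH])
    finally show ?thesis .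
  qed
  have cF: "cupz (hd0 h) H = (\<lambda>x. t x - cupz (sg h) (cupz u H) x)"
  proof
    fix x
    have "cupz (hd0 h) H x = cupz (cupz t h) H x - cupz (cupz (sg h) u) H x"
      by (simp only: dh cupz_fdiff1)
    also have "\<dots> = cupz t (cupz h H) x - cupz (sg h) (cupz u H) x"
      by (simp only: cupz_assoc[OF t lh lH] cupz_assoc[OF lsh u lH])
    also have "\<dots> = t x - cupz (sg h) (cupz u H) x"
      by (simp only: hHF cupz_one_right[OF t])
    finally show "cupz (hd0 h) H x = t x - cupz (sg h) (cupz u H) x" .
  qed
  have sgHh: "cupz (sg H) (sg h) = one"
  proof
    fix x
    have "cupz (sg H) (sg h) x = sg (cupz H h) x" by (rule sg_cupz[OF lH lh, symmetric])
    also have "\<dots> = one x" by (simp only: HhF sg_one)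
    finally show "cupz (sg H) (sg h) x = one x" .
  qed
  have dH: "hd0 H = (\<lambda>c. cupz u H c - cupz (sg H) t c)"
  proof
    fix c
    have "hd0 H c = - cupz (sg H) (\<lambda>x. t x - cupz (sg h) (cupz u H) x) c" by (simp only: b cF)
    also have "\<dots> = - (cupz (sg H) t c - cupz (sg H) (cupz (sg h) (cupz u H)) c)"
      by (simp only: cupz_fdiff2)
    also have "cupz (sg H) (cupz (sg h) (cupz u H)) c = cupz u H c"
      by (simp only: cupz_assoc[OF lsH lsh lin_cupz[OF u lH], symmetric] sgHh cupz_one_left[OF lin_cupz[OF u lH]])
    finally show "hd0 H c = cupz u H c - cupz (sg H) t c" by simp
  qed
  have eH: "\<forall>c. epsA (H c) = epsC c"
  proof
    fix c
    have "epsA (H c) = epsA (cupz H h c)" by (rule eps_cupz[OF lH eh, symmetric])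
    then show "epsA (H c) = epsC c" by (simp add: Hh one_apply epsA_smul epsA_one)
  qed
  have HuC: "H uC = 1"
  proof -
    have "H uC = H uC * h uC" by (simp add: huC)
    also have "\<dots> = cupz H h uC" by (rule cupz_unit[OF lH lh, symmetric])
    also have "\<dots> = 1" by (simp add: Hh one_apply unit_eps)
    finally show ?thesis .
  qed
  have uH: "\<forall>r. H (smC r uC) = smA r 1" by (simp add: lin_smul[OF lH] HuC)
  have tc: "tc_homotopy C A u t H"
    unfolding tc_iff[OF u] using hdH dH eH uH by blast
  have gI: "g x \<in> I" for x
  proof -
    have "h x - hom_one C A x \<in> I" using ht by (simp add: trivial_mod_def)
    then have "- (h x - hom_one C A x) \<in> I" by (rule ideal_minus[OF I])
    then show ?thesis by (simp add: gdef)
  qed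
  have tr: "trivial_mod C A I H"
    unfolding trivial_mod_def
  proof
    fix c
    have "H c = (\<Sum>n<Suc (NN c). cpow g n c)" by (rule HM) simp
    also have "\<dots> = one c + (\<Sum>n<NN c. cpow g (Suc n) c)" by (simp only: sum.lessThan_Suc_shift) simp
    finally have "H c - hom_one C A c = (\<Sum>n<NN c. cupz g (cpow g n) c)" by (simp add: one_def)
    also have "\<dots> \<in> I" by (rule ideal_sum[OF I]) (rule ideal_cupz1[OF I gI])
    finally show "H c - hom_one C A c \<in> I" .
  qed
  have e1: "cup C A 0 h H = hom_one C A" by (simp add: cup0_eq[OF lh] hHF one_def)
  have e2: "cup C A 0 H h = hom_one C A" by (simp add: cup0_eq[OF lH] HhF one_def)
  show ?thesis
    unfolding cpe H_def[symmetric] using nil hdH e1 e2 tc tr by blast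
qed

end


theorem lemma2p2:
  fixes A :: "('k::comm_ring_1, 'a::ring_1) dga"
    and C :: "('k, 'c::ab_group_add) dgc"
    and I :: "'a set"
  assumes "aug_dga A" and "dg_ideal A I" and "coaug_dgc C" and "cocomplete C"
  shows "equiv {t. twisting C A t} {(t, u). twisting C A t \<and> twisting C A u \<and> triv_homotopic C A I t u}
    \<and> (\<forall>t u v h k. twisting C A t \<and> twisting C A u \<and> twisting C A v \<and>
          tc_homotopy C A t u h \<and> trivial_mod C A I h \<and>
          tc_homotopy C A u v k \<and> trivial_mod C A I k \<longrightarrow>
          tc_homotopy C A t v (cup C A 0 h k) \<and> trivial_mod C A I (cup C A 0 h k))
    \<and> (\<forall>t u h. twisting C A t \<and> twisting C A u \<and>
          tc_homotopy C A t u h \<and> trivial_mod C A I h \<longrightarrow>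
          (let g = (\<lambda>c. hom_one C A c - h c);
               hinv = series (cup_pow C A g)
           in (\<forall>c. \<exists>N. \<forall>m\<ge>N. cup_pow C A g m c = 0) \<and>
              hom_deg C A 0 hinv \<and>
              cup C A 0 h hinv = hom_one C A \<and> cup C A 0 hinv h = hom_one C A \<and>
              tc_homotopy C A u t hinv \<and> trivial_mod C A I hinv))"
proof -
  interpret S: setting A C using assms(1,3) by (rule setting.intro)
  have lt: "S.lin t" if "twisting C A t" for t
    using that unfolding twisting_def by (blast intro: S.lin_hom_deg)
  have PI: "\<forall>t u v h k. twisting C A t \<and> twisting C A u \<and> twisting C A v \<and>
          tc_homotopy C A t u h \<and> trivial_mod C A I h \<and>
          tc_homotopy C A u v k \<and> trivial_mod C A I k \<longrightarrow>
          tc_homotopy C A t v (cup C A 0 h k) \<and> trivial_mod C A I (cup C A 0 h k)"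
    using S.part_i[OF assms(2)] lt by blast
  have PII: "\<forall>t u h. twisting C A t \<and> twisting C A u \<and>
          tc_homotopy C A t u h \<and> trivial_mod C A I h \<longrightarrow>
          (let g = (\<lambda>c. hom_one C A c - h c);
               hinv = series (cup_pow C A g)
           in (\<forall>c. \<exists>N. \<forall>m\<ge>N. cup_pow C A g m c = 0) \<and>
              hom_deg C A 0 hinv \<and>
              cup C A 0 h hinv = hom_one C A \<and> cup C A 0 hinv h = hom_one C A \<and>
              tc_homotopy C A u t hinv \<and> trivial_mod C A I hinv)"
    unfolding Let_def
  proof (intro allI impI)
    fix t u h
    assume a: "twisting C A t \<and> twisting C A u \<and> tc_homotopy C A t u h \<and> trivial_mod C A I h"
    show "(\<forall>c. \<exists>N. \<forall>m\<ge>N. cup_pow C A (\<lambda>c. hom_one C A c - h c) m c = 0) \<and>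
      hom_deg C A 0 (series (cup_pow C A (\<lambda>c. hom_one C A c - h c))) \<and>
      cup C A 0 h (series (cup_pow C A (\<lambda>c. hom_one C A c - h c))) = hom_one C A \<and>
      cup C A 0 (series (cup_pow C A (\<lambda>c. hom_one C A c - h c))) h = hom_one C A \<and>
      tc_homotopy C A u t (series (cup_pow C A (\<lambda>c. hom_one C A c - h c))) \<and>
      trivial_mod C A I (series (cup_pow C A (\<lambda>c. hom_one C A c - h c)))"
      by (rule S.part_ii[OF assms(2) assms(4) lt lt _ _ refl]) (use a in blast)+
  qed
  have rfl: "triv_homotopic C A I t t" if tw: "twisting C A t" for t
  proof -
    have l: "S.lin t" by (rule lt[OF tw])
    have "S.hd0 S.one = (\<lambda>c. S.cupz t S.one c - S.cupz (S.sg S.one) t c)"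
      by (simp add: S.hd0_one fun_eq_iff S.sg_one S.cupz_one_left[OF l] S.cupz_one_right[OF l])
    moreover have "\<forall>c. a_eps A (S.one c) = c_eps C c"
      by (simp add: S.one_apply S.epsA_smul S.epsA_one)
    moreover have "\<forall>r. S.one (c_smul C r (c_unit C)) = a_smul A r 1"
      by (simp add: S.one_apply S.epsC_smul S.unit_eps)
    ultimately have "tc_homotopy C A t t S.one"
      unfolding S.tc_iff[OF l] using S.hom_deg0_one by blast
    moreover have "trivial_mod C A I S.one"
      by (simp add: trivial_mod_def S.one_def S.ideal_0[OF assms(2)])
    ultimately show ?thesis unfolding triv_homotopic_def by blast
  qed
  have EQ: "equiv {t. twisting C A t} {(t, u). twisting C A t \<and> twisting C A u \<and> triv_homotopic C A I t u}"
  proof (rule equivI)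
    show "{(t, u). twisting C A t \<and> twisting C A u \<and> triv_homotopic C A I t u} \<subseteq> {t. twisting C A t} \<times> {t. twisting C A t}"
      by auto
    show "refl_on {t. twisting C A t} {(t, u). twisting C A t \<and> twisting C A u \<and> triv_homotopic C A I t u}"
      by (rule refl_onI) (simp add: rfl)
    show "sym {(t, u). twisting C A t \<and> twisting C A u \<and> triv_homotopic C A I t u}"
    proof (rule symI)
      fix t u assume "(t, u) \<in> {(t, u). twisting C A t \<and> twisting C A u \<and> triv_homotopic C A I t u}"
      then have tw: "twisting C A t" "twisting C A u" and "triv_homotopic C A I t u" by auto
      then obtain h where h: "tc_homotopy C A t u h" "trivial_mod C A I h"
        unfolding triv_homotopic_def by blast
      have "tc_homotopy C A u t (series (cup_pow C A (\<lambda>c. hom_one C A c - h c))) \<and>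
          trivial_mod C A I (series (cup_pow C A (\<lambda>c. hom_one C A c - h c)))"
        using PII tw h unfolding Let_def by blast
      then show "(u, t) \<in> {(t, u). twisting C A t \<and> twisting C A u \<and> triv_homotopic C A I t u}"
        using tw unfolding triv_homotopic_def by blast
    qed
    show "trans {(t, u). twisting C A t \<and> twisting C A u \<and> triv_homotopic C A I t u}"
    proof (rule transI)
      fix t u v
      assume "(t, u) \<in> {(t, u). twisting C A t \<and> twisting C A u \<and> triv_homotopic C A I t u}"
        and "(u, v) \<in> {(t, u). twisting C A t \<and> twisting C A u \<and> triv_homotopic C A I t u}"
      then have tw: "twisting C A t" "twisting C A u" "twisting C A v"
        and "triv_homotopic C A I t u" "triv_homotopic C A I u v" by auto
      then obtain h k where h: "tc_homotopy C A t u h" "trivial_mod C A I h"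
        and k: "tc_homotopy C A u v k" "trivial_mod C A I k"
        unfolding triv_homotopic_def by blast
      have "tc_homotopy C A t v (cup C A 0 h k) \<and> trivial_mod C A I (cup C A 0 h k)"
        using PI tw h k by blast
      then show "(t, v) \<in> {(t, u). twisting C A t \<and> twisting C A u \<and> triv_homotopic C A I t u}"
        using tw unfolding triv_homotopic_def by blast
    qed
  qed
  show ?thesis using EQ PI PII by blast
qed


end
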